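(* Let $\ell\in\mathbb{F}$ and let $V_{\hat{\mathfrak{g}}}(\ell,0)$ be the affine vertex algebra of level $\ell$, equipped with its $\mathbb{Z}$-grading and its $\mathcal{H}$-module structure (described in the context). Then $V_{\hat{\mathfrak{g}}}(\ell,0)$ is an $\mathcal{H}$-module vertex algebra.
   Context: $\mathbb{F}$ is an algebraically closed field of odd prime characteristic $p$. $\mathcal{H}$: let $\mathfrak{sl}_2$ over $\mathbb{C}$ have basis $L_{-1},L_0,L_1$ with $[L_1,L_{-1}]=2L_0$, $[L_0,L_{\pm1}]=\mp L_{\pm1}$; put $L_{\pm1}^{(n)}=L_{\pm1}^n/n!$, $L_0^{(n)}=\binom{-2L_0}{n}$ in $U(\mathfrak{sl}_2)$; $U(\mathfrak{sl}_2)_{\mathbb{Z}}$ is the $\mathbb{Z}$-span of the $L_{-1}^{(i)}L_0^{(j)}L_1^{(k)}$, and $\mathcal{H}=\mathbb{F}\otimes_{\mathbb{Z}}U(\mathfrak{sl}_2)_{\mathbb{Z}}$ (Hopf algebra with $\Delta(L_{\pm1}^{(n)})=\sum_iL_{\pm1}^{(n-i)}\otimes L_{\pm1}^{(i)}$, $\Delta(L_0^{(n)})=\sum_iL_0^{(n-i)}\otimes L_0^{(i)}$, $\varepsilon=\delta_{n,0}$). $e^{zL_{\pm1}}=\sum_{n\ge0}z^nL_{\pm1}^{(n)}$. For $v$ homogeneous of degree $n$, $f(z)^{\deg}v:=f(z)^nv$, extended linearly. Every vertex algebra $V$ is a module for the bialgebra $\mathcal{B}$ (basis $\mathcal{D}^{(n)}$,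 $\mathcal{D}^{(m)}\mathcal{D}^{(n)}=\binom{m+n}{n}\mathcal{D}^{(m+n)}$) via $\mathcal{D}^{(n)}v=v_{-n-1}\mathbf{1}$. A $\mathbb{Z}$-graded vertex algebra: $V=\bigoplus V_n$, $\mathbf{1}\in V_0$, $u_rV_n\subset V_{m+n-r-1}$ for $u\in V_m$. A $\mathbb{Z}$-graded weight $\mathcal{H}$-module: $W=\bigoplus W_n$ with $\mathcal{H}$-action, $L_{\pm1}^{(r)}W_n\subset W_{n\mp r}$, $L_0^{(r)}|_{W_n}=\binom{-2n}{r}$. An $\mathcal{H}$-module vertex algebra: a $\mathbb{Z}$-graded vertex algebra $V$ which is a $\mathbb{Z}$-graded weight $\mathcal{H}$-module with $L_{-1}^{(n)}=\mathcal{D}^{(n)}$, such that $V_n=0$ for $n\ll0$, $L_1^{(n)}\mathbf{1}=\delta_{n,0}\mathbf{1}$, and $e^{zL_1}Y(v,z_0)e^{-zL_1}=Y\bigl(e^{z(1-zz_0)L_1}(1-zz_0)^{-2\deg}v,z_0/(1-zz_0)\bigr)$ for all $v\in V$. Affine setting: $\mathfrak{g}$ is a Lie algebra over $\mathbb{F}$ with a symmetric invariant bilinear form $\langle\cdot,\cdot\rangle$; $\hat{\mathfrak{g}}=\mathfrak{g}\otimes\mathbb{F}[t,t^{-1}]\oplus\mathbb{F}\mathbf{k}$ with $\mathbf{k}$ central and $[a(m),b(n)]=[a,b](m+n)+m\langle a,b\rangle\delta_{m+n,0}\mathbf{k}$, where $a(n)=a\otimes t^n$. $\hat{\mathfrak{g}}$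 is an $\mathcal{H}$-module Lie algebra via $L^{(r)}_{\pm1}\mathbf{k}=L_0^{(r)}\mathbf{k}=\delta_{r,0}\mathbf{k}$, $L_{-1}^{(r)}a(n)=(-1)^r\binom{n}{r}a(n-r)$, $L_1^{(r)}a(n)=\binom{-n}{r}a(n+r)$, $L_0^{(r)}a(n)=\binom{2n}{r}a(n)$; this extends uniquely to make $U(\hat{\mathfrak{g}})$ an $\mathcal{H}$-module algebra ($b(xy)=\sum(b^{(1)}x)(b^{(2)}y)$, $b\cdot1=\varepsilon(b)1$). $V_{\hat{\mathfrak{g}}}(\ell,0)=U(\hat{\mathfrak{g}})/J_\ell$, where $J_\ell$ is the left ideal generated by $\mathfrak{g}\otimes\mathbb{F}[t]$ and $\mathbf{k}-\ell$; $J_\ell$ is an $\mathcal{H}$-submodule, so $V_{\hat{\mathfrak{g}}}(\ell,0)$ is an $\mathcal{H}$-module. It is a vertex algebra with vacuum $\mathbf{1}=1+J_\ell$ and $Y(a,x)=\sum_n a(n)x^{-n-1}$ for $a\in\mathfrak{g}$ (identified with $a(-1)\mathbf{1}$), generated by $\mathfrak{g}$; it is $\mathbb{Z}$-graded by $\deg\mathbf{1}=0$ and $\deg a(n)=-n$ (so $V_n$ is spanned by $a^{(1)}(-s_1)\cdots a^{(r)}(-s_r)\mathbf{1}$ with $s_i\ge1$, $\sum s_i=n$). *)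

theory Defs
  imports "HOL-Computational_Algebra.Polynomial"
begin

text \<open>Integer binomial coefficient mapped into the ground field (computed in Q, where it is an integer, then mapped via Z).\<close>
definition ibinom :: "int \<Rightarrow> nat \<Rightarrow> 'k::comm_ring_1" where
  "ibinom n k = of_int \<lfloor>(of_int n :: rat) gchoose k\<rfloor>"

text \<open>Sum of a finitely supported family (used where truncation makes sums finite).\<close>
definition fsum :: "(nat \<Rightarrow> 'v::comm_monoid_add) \<Rightarrow> 'v" where
  "fsum f = sum f {i. f i \<noteq> 0}"

definition alg_closed :: "'k::field itself \<Rightarrow> bool" where
  "alg_closed _ \<longleftrightarrow> (\<forall>q :: 'k poly. degree q > 0 \<longrightarrow> (\<exists>x. poly q x = 0))"

definition lie_alg_form ::
  "('k::field \<Rightarrow> 'g::ab_group_add \<Rightarrow> 'g) \<Rightarrow> ('g \<Rightarrow> 'g \<Rightarrow> 'g) \<Rightarrow> ('g \<Rightarrow> 'g \<Rightarrow> 'k) \<Rightarrow> bool" where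
  "lie_alg_form scg br fm \<longleftrightarrow> module scg \<and>
     (\<forall>a b c. br (a + b) c = br a c + br b c) \<and>
     (\<forall>k a b. br (scg k a) b = scg k (br a b)) \<and>
     (\<forall>a. br a a = 0) \<and>
     (\<forall>a b c. br a (br b c) + br b (br c a) + br c (br a b) = 0) \<and>
     (\<forall>a b. fm a b = fm b a) \<and>
     (\<forall>a b c. fm (a + b) c = fm a c + fm b c) \<and>
     (\<forall>k a b. fm (scg k a) b = k * fm a b) \<and>
     (\<forall>a b c. fm (br a b) c = fm a (br b c))"

text \<open>rho a n x is the action of a(n) = a \<otimes> t^n; the central element k acts as ell.
  The module is given by a carrier C with addition add and scaling scl.\<close>
definition aff_rep ::
  "('k::field \<Rightarrow> 'g::ab_group_add \<Rightarrow> 'g) \<Rightarrow> ('g \<Rightarrow> 'g \<Rightarrow> 'g) \<Rightarrow> ('g \<Rightarrow> 'g \<Rightarrow> 'k) \<Rightarrow> 'k \<Rightarrow>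
   'w set \<Rightarrow> ('w \<Rightarrow> 'w \<Rightarrow> 'w) \<Rightarrow> ('k \<Rightarrow> 'w \<Rightarrow> 'w) \<Rightarrow> ('g \<Rightarrow> int \<Rightarrow> 'w \<Rightarrow> 'w) \<Rightarrow> bool" where
  "aff_rep scg br fm ell C add scl rho \<longleftrightarrow>
     (\<forall>a n x. x \<in> C \<longrightarrow> rho a n x \<in> C) \<and>
     (\<forall>a b n x. x \<in> C \<longrightarrow> rho (a + b) n x = add (rho a n x) (rho b n x)) \<and>
     (\<forall>k a n x. x \<in> C \<longrightarrow> rho (scg k a) n x = scl k (rho a n x)) \<and>
     (\<forall>a n x y. x \<in> C \<longrightarrow> y \<in> C \<longrightarrow> rho a n (add x y) = add (rho a n x) (rho a n y)) \<and>
     (\<forall>a n k x. x \<in> C \<longrightarrow> rho a n (scl k x) = scl k (rho a n x)) \<and>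
     (\<forall>a b m n x. x \<in> C \<longrightarrow>
        rho a m (rho b n x) =
          add (rho b n (rho a m x))
              (add (rho (br a b) (m + n) x)
                   (scl (of_int m * (if m + n = 0 then fm a b else 0) * ell) x)))"

inductive generated_by_vac ::
  "('k \<Rightarrow> 'v::ab_group_add \<Rightarrow> 'v) \<Rightarrow> ('g \<Rightarrow> int \<Rightarrow> 'v \<Rightarrow> 'v) \<Rightarrow> 'v \<Rightarrow> 'v \<Rightarrow> bool"
  for sc rho one where
  gen_one: "generated_by_vac sc rho one one"
| gen_add: "generated_by_vac sc rho one x \<Longrightarrow> generated_by_vac sc rho one y \<Longrightarrow>
            generated_by_vac sc rho one (x + y)"
| gen_scale: "generated_by_vac sc rho one x \<Longrightarrow> generated_by_vac sc rho one (sc k x)"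
| gen_act: "generated_by_vac sc rho one x \<Longrightarrow> generated_by_vac sc rho one (rho a n x)"

text \<open>(V, rho, one) is the vacuum module V(ell,0) = U(g^)/J_ell: a level-ell module,
  generated by one, with one killed by g \<otimes> F[t], and universal among such
  (universality tested against all such modules realised as subspaces of the big
  vector space of functions on words; V(ell,0) itself embeds there).\<close>
definition affine_vacuum_module ::
  "('k::field \<Rightarrow> 'g::ab_group_add \<Rightarrow> 'g) \<Rightarrow> ('g \<Rightarrow> 'g \<Rightarrow> 'g) \<Rightarrow> ('g \<Rightarrow> 'g \<Rightarrow> 'k) \<Rightarrow> 'k \<Rightarrow>
   ('k \<Rightarrow> 'v::ab_group_add \<Rightarrow> 'v) \<Rightarrow> ('g \<Rightarrow> int \<Rightarrow> 'v \<Rightarrow> 'v) \<Rightarrow> 'v \<Rightarrow> bool" where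
  "affine_vacuum_module scg br fm ell sc rho one \<longleftrightarrow>
     module sc \<and>
     aff_rep scg br fm ell UNIV (+) sc rho \<and>
     (\<forall>a n. n \<ge> 0 \<longrightarrow> rho a n one = 0) \<and>
     (\<forall>v. generated_by_vac sc rho one v) \<and>
     (\<forall>(W :: (('g \<times> int) list \<Rightarrow> 'k) set) rhoW w.
        ((\<lambda>i. 0) \<in> W \<and> (\<forall>x\<in>W. \<forall>y\<in>W. (\<lambda>i. x i + y i) \<in> W) \<and>
         (\<forall>k. \<forall>x\<in>W. (\<lambda>i. k * x i) \<in> W) \<and>
         aff_rep scg br fm ell W (\<lambda>x y i. x i + y i) (\<lambda>k x i. k * x i) rhoW \<and>
         w \<in> W \<and> (\<forall>a n. n \<ge> 0 \<longrightarrow> rhoW a n w = (\<lambda>i. 0)))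
        \<longrightarrow> (\<exists>f. (\<forall>v. f v \<in> W) \<and> (\<forall>u v. f (u + v) = (\<lambda>i. f u i + f v i)) \<and>
                 (\<forall>k v. f (sc k v) = (\<lambda>i. k * f v i)) \<and> f one = w \<and>
                 (\<forall>a n v. f (rho a n v) = rhoW a n (f v))))"

inductive homog ::
  "('k \<Rightarrow> 'v::ab_group_add \<Rightarrow> 'v) \<Rightarrow> ('g \<Rightarrow> int \<Rightarrow> 'v \<Rightarrow> 'v) \<Rightarrow> 'v \<Rightarrow> int \<Rightarrow> 'v \<Rightarrow> bool"
  for sc rho one where
  homog_one: "homog sc rho one 0 one"
| homog_zero: "homog sc rho one d 0"
| homog_add: "homog sc rho one d x \<Longrightarrow> homog sc rho one d y \<Longrightarrow> homog sc rho one d (x + y)"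
| homog_scale: "homog sc rho one d x \<Longrightarrow> homog sc rho one d (sc k x)"
| homog_act: "homog sc rho one d x \<Longrightarrow> s \<ge> 1 \<Longrightarrow> homog sc rho one (d + s) (rho a (- s) x)"

text \<open>Lm r, L0 r, L1 r are the actions of L_{-1}^{(r)}, L_0^{(r)}, L_1^{(r)}; they are
  determined by b.1 = eps(b) 1 and b(xy) = sum (b1 x)(b2 y) with the coproduct.\<close>
definition H_action_induced ::
  "('k::field \<Rightarrow> 'v::ab_group_add \<Rightarrow> 'v) \<Rightarrow> ('g \<Rightarrow> int \<Rightarrow> 'v \<Rightarrow> 'v) \<Rightarrow> 'v \<Rightarrow>
   (nat \<Rightarrow> 'v \<Rightarrow> 'v) \<Rightarrow> (nat \<Rightarrow> 'v \<Rightarrow> 'v) \<Rightarrow> (nat \<Rightarrow> 'v \<Rightarrow> 'v) \<Rightarrow> bool" where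
  "H_action_induced sc rho one Lm L0 L1 \<longleftrightarrow>
     (\<forall>L \<in> {Lm, L0, L1}. \<forall>r u v k.
        L r (u + v) = L r u + L r v \<and> L r (sc k v) = sc k (L r v) \<and>
        L r one = (if r = 0 then one else 0)) \<and>
     (\<forall>r a n v. Lm r (rho a n v) =
        (\<Sum>i\<le>r. sc ((-1) ^ i * ibinom n i) (rho a (n - int i) (Lm (r - i) v)))) \<and>
     (\<forall>r a n v. L0 r (rho a n v) =
        (\<Sum>i\<le>r. sc (ibinom (2 * n) i) (rho a n (L0 (r - i) v)))) \<and>
     (\<forall>r a n v. L1 r (rho a n v) =
        (\<Sum>i\<le>r. sc (ibinom (- n) i) (rho a (n + int i) (L1 (r - i) v))))"

text \<open>Y u n w = u_n w. Vertex algebra over a field: bilinearity, truncation,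
  vacuum, creation, and the Borcherds (Jacobi) identity in component form.\<close>
definition vertex_algebra ::
  "('k::field \<Rightarrow> 'v::ab_group_add \<Rightarrow> 'v) \<Rightarrow> ('v \<Rightarrow> int \<Rightarrow> 'v \<Rightarrow> 'v) \<Rightarrow> 'v \<Rightarrow> bool" where
  "vertex_algebra sc Y one \<longleftrightarrow> module sc \<and>
     (\<forall>u n v w. Y u n (v + w) = Y u n v + Y u n w) \<and>
     (\<forall>u n k w. Y u n (sc k w) = sc k (Y u n w)) \<and>
     (\<forall>u v n w. Y (u + v) n w = Y u n w + Y v n w) \<and>
     (\<forall>k u n w. Y (sc k u) n w = sc k (Y u n w)) \<and>
     (\<forall>u w. \<exists>N. \<forall>n\<ge>N. Y u n w = 0) \<and>
     (\<forall>n w. Y one n w = (if n = -1 then w else 0)) \<and>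
     (\<forall>u n. n \<ge> 0 \<longrightarrow> Y u n one = 0) \<and>
     (\<forall>u. Y u (-1) one = u) \<and>
     (\<forall>u v w l m n.
        fsum (\<lambda>i. sc (ibinom m i) (Y (Y u (l + int i) v) (m + n - int i) w)) =
        fsum (\<lambda>i. sc ((-1) ^ i * ibinom l i)
                   (Y u (l + m - int i) (Y v (n + int i) w)
                    - sc (if even l then 1 else -1) (Y v (l + n - int i) (Y u (m + int i) w)))))"

definition graded_direct ::
  "('k::field \<Rightarrow> 'v::ab_group_add \<Rightarrow> 'v) \<Rightarrow> (int \<Rightarrow> 'v set) \<Rightarrow> bool" where
  "graded_direct sc Vn \<longleftrightarrow>
     (\<forall>n. 0 \<in> Vn n \<and> (\<forall>x\<in>Vn n. \<forall>y\<in>Vn n. x + y \<in> Vn n) \<and> (\<forall>k. \<forall>x\<in>Vn n. sc k x \<in> Vn n)) \<and>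
     (\<forall>v. \<exists>S c. finite S \<and> (\<forall>n\<in>S. c n \<in> Vn n) \<and> v = (\<Sum>n\<in>S. c n)) \<and>
     (\<forall>S c. finite S \<longrightarrow> (\<forall>n\<in>S. c n \<in> Vn n) \<longrightarrow> (\<Sum>n\<in>S. c n) = 0 \<longrightarrow> (\<forall>n\<in>S. c n = 0))"

definition Z_graded_VA ::
  "('k::field \<Rightarrow> 'v::ab_group_add \<Rightarrow> 'v) \<Rightarrow> ('v \<Rightarrow> int \<Rightarrow> 'v \<Rightarrow> 'v) \<Rightarrow> 'v \<Rightarrow> (int \<Rightarrow> 'v set) \<Rightarrow> bool" where
  "Z_graded_VA sc Y one Vn \<longleftrightarrow> vertex_algebra sc Y one \<and> graded_direct sc Vn \<and> one \<in> Vn 0 \<and>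
     (\<forall>u v m n r. u \<in> Vn m \<longrightarrow> v \<in> Vn n \<longrightarrow> Y u r v \<in> Vn (m + n - r - 1))"

definition graded_weight_H ::
  "('k::field \<Rightarrow> 'v::ab_group_add \<Rightarrow> 'v) \<Rightarrow> (int \<Rightarrow> 'v set) \<Rightarrow>
   (nat \<Rightarrow> 'v \<Rightarrow> 'v) \<Rightarrow> (nat \<Rightarrow> 'v \<Rightarrow> 'v) \<Rightarrow> (nat \<Rightarrow> 'v \<Rightarrow> 'v) \<Rightarrow> bool" where
  "graded_weight_H sc Vn Lm L0 L1 \<longleftrightarrow> graded_direct sc Vn \<and>
     (\<forall>r n v. v \<in> Vn n \<longrightarrow>
        Lm r v \<in> Vn (n + int r) \<and> L1 r v \<in> Vn (n - int r) \<and>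
        L0 r v = sc (ibinom (- 2 * n) r) v)"

text \<open>The conjugation formula, compared coefficientwise: coefficient of z^a z0^b
  for homogeneous v of degree d (both sides are finite sums), where
  z0/(1 - z z0) and (1 - z z0)^N are expanded in nonnegative powers of z.\<close>
definition H_module_VA ::
  "('k::field \<Rightarrow> 'v::ab_group_add \<Rightarrow> 'v) \<Rightarrow> ('v \<Rightarrow> int \<Rightarrow> 'v \<Rightarrow> 'v) \<Rightarrow> 'v \<Rightarrow> (int \<Rightarrow> 'v set) \<Rightarrow>
   (nat \<Rightarrow> 'v \<Rightarrow> 'v) \<Rightarrow> (nat \<Rightarrow> 'v \<Rightarrow> 'v) \<Rightarrow> (nat \<Rightarrow> 'v \<Rightarrow> 'v) \<Rightarrow> bool" where
  "H_module_VA sc Y one Vn Lm L0 L1 \<longleftrightarrow>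
     Z_graded_VA sc Y one Vn \<and> graded_weight_H sc Vn Lm L0 L1 \<and>
     (\<forall>r v. Lm r v = Y v (- int r - 1) one) \<and>
     (\<exists>N. \<forall>n<N. Vn n = {0}) \<and>
     (\<forall>r. L1 r one = (if r = 0 then one else 0)) \<and>
     (\<forall>d v w a b. v \<in> Vn d \<longrightarrow>
        (\<Sum>k\<le>a. sc ((-1) ^ k) (L1 (a - k) (Y v (- b - 1) (L1 k w)))) =
        (\<Sum>k\<le>a. sc ((-1) ^ (a - k) * ibinom (int k - 2 * d + (int a - int k - b - 1) + 1) (a - k))
                    (Y (L1 k v) (int a - int k - b - 1) w)))"

end

theory Submission
  imports Defs "HOL-Computational_Algebra.Formal_Power_Series"
begin


definition ib :: "int \<Rightarrow> nat \<Rightarrow> int" where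
  "ib x k = \<lfloor>(of_int x :: rat) gchoose k\<rfloor>"

lemma ib_rat: "(of_int (ib x k) :: rat) = of_int x gchoose k"
  unfolding ib_def by (simp flip: of_int_gbinomial)

lemma ibinom_ib: "ibinom x k = of_int (ib x k)"
  unfolding ibinom_def ib_def ..

lemma ib_eqI: "(of_int a :: rat) = of_int b \<Longrightarrow> a = b" by simp

lemma B_vand: "(\<Sum>k\<le>n. ib a k * ib b (n - k)) = ib (a + b) n"
  apply (rule ib_eqI)
  using gbinomial_Vandermonde[of "of_int a :: rat" "of_int b" n]
  by (simp add: ib_rat atLeast0AtMost)

lemma B_trin: "k \<le> m \<Longrightarrow> ib a m * ib (int m) k = ib a k * ib (a - int k) (m - k)"
  apply (rule ib_eqI)
  using gbinomial_trinomial_revision[of k m "of_int a :: rat"]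
  by (simp add: ib_rat)

lemma B_nat: "ib (int m) k = int (m choose k)"
  apply (rule ib_eqI)
  by (simp add: ib_rat binomial_gbinomial)

lemma B_nat_sym: "k \<le> m \<Longrightarrow> ib (int m) k = ib (int m) (m - k)"
  by (simp add: B_nat binomial_symmetric[symmetric])

lemma B_nat_gt: "m < k \<Longrightarrow> ib (int m) k = 0"
  by (simp add: B_nat)

lemma B_nn: "ib (int m) m = 1" by (simp add: B_nat)

lemma B_0 [simp]: "ib a 0 = 1"
  by (rule ib_eqI) (simp add: ib_rat)

lemma B_neg: "(-1)^k * ib a k = ib (int k - a - 1) k"
  apply (rule ib_eqI)
  using gbinomial_negated_upper[of "of_int a :: rat" k]
  by (simp add: ib_rat)

lemma B_zero_left: "ib 0 k = (if k = 0 then 1 else 0)"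
  by (rule ib_eqI) (simp add: ib_rat gbinomial_0_left)

lemma B_alt: "(\<Sum>k\<le>m. (-1)^k * ib (int m) k) = (if m = 0 then 1 else 0)"
  using choose_alternating_sum[of m, where 'a=int] by (cases "m = 0") (auto simp: B_nat)

lemma sum_tri: "(\<Sum>i\<le>N. \<Sum>j\<le>N-i. g i j) = (\<Sum>(i,j)\<in>{(i,j). i+j \<le> (N::nat)}. g i j)"
proof -
  have "{(i,j). i+j \<le> N} = Sigma {..N} (\<lambda>i. {..N-i})" by auto
  then show ?thesis by (simp add: sum.Sigma)
qed

lemma tri1: "(\<Sum>j\<le>N. \<Sum>l\<le>N-j. F j l) = (\<Sum>m\<le>(N::nat). \<Sum>j\<le>m. F j (m-j))"
  by (simp add: sum_tri sum.triangle_reindex_eq)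

lemma tri_swap: "(\<Sum>q\<le>N. \<Sum>r\<le>q. f q r) = (\<Sum>r\<le>(N::nat). \<Sum>s\<le>N-r. f (r+s) r)"
proof -
  have "(\<Sum>r\<le>N. \<Sum>s\<le>N-r. f (r+s) r) = (\<Sum>k\<le>N. \<Sum>i\<le>k. f (i + (k - i)) i)"
    by (simp add: sum_tri sum.triangle_reindex_eq)
  also have "\<dots> = (\<Sum>q\<le>N. \<Sum>r\<le>q. f q r)"
    by (intro sum.cong refl) auto
  finally show ?thesis ..
qed

lemma tri_cond: "(\<Sum>q\<le>J. (if r \<le> q then h (q - r) else 0)) = (if r \<le> (J::nat) then (\<Sum>s\<le>J-r. h s) else 0)"
proof (cases "r \<le> J")
  case True
  have "(\<Sum>q\<le>J. (if r \<le> q then h (q - r) else 0)) = (\<Sum>q\<in>{r..J}. h (q - r))"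
    by (rule sum.mono_neutral_cong_right) auto
  also have "\<dots> = (\<Sum>s\<le>J-r. h s)"
    using True by (intro sum.reindex_bij_witness[where i="\<lambda>s. s + r" and j="\<lambda>q. q - r"]) auto
  finally show ?thesis using True by simp
qed auto

lemma sum_min_cond: "(\<Sum>r\<le>(I::nat). (if r \<le> J then f r else 0)) = (\<Sum>r\<le>min I J. f r)"
  by (rule sum.mono_neutral_cong_right) auto

lemma I3c: fixes I J :: nat and p Z :: int shows "(\<Sum>q\<le>min I J. ib p (I-q) * ib (Z - int I - p) (J-q) * ib (int q - int I) q)
   = (\<Sum>q\<le>J. ib Z (J-q) * ib (-p) q * ib (p + int q) I)"
proof -
  define M where "M = (\<Sum>r\<le>min I J. ib p (I-r) * ib (-p) r * ib (Z - p - int r) (J-r))"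
  have R: "(\<Sum>q\<le>J. ib Z (J-q) * ib (-p) q * ib (p + int q) I) = M"
  proof -
    have "(\<Sum>q\<le>J. ib Z (J-q) * ib (-p) q * ib (p + int q) I)
        = (\<Sum>q\<le>J. \<Sum>r\<le>I. ib Z (J-q) * ib p (I-r) * (ib (-p) q * ib (int q) r))"
    proof (rule sum.cong[OF refl])
      fix q
      have "ib (p + int q) I = (\<Sum>r\<le>I. ib (int q) r * ib p (I-r))"
        using B_vand[where n=I and a="int q" and b=p] by (simp add: add.commute)
      then show "ib Z (J-q) * ib (-p) q * ib (p + int q) I = (\<Sum>r\<le>I. ib Z (J-q) * ib p (I-r) * (ib (-p) q * ib (int q) r))"
        by (simp add: sum_distrib_left mult_ac)
    qed
    also have "\<dots> = (\<Sum>q\<le>J. \<Sum>r\<le>I. (if r \<le> q then ib p (I-r) * ib (-p) r * (ib (-p - int r) (q - r) * ib Z (J - r - (q - r))) else 0))"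
    proof (intro sum.cong refl)
      fix q r
      show "ib Z (J-q) * ib p (I-r) * (ib (-p) q * ib (int q) r) = (if r \<le> q then ib p (I-r) * ib (-p) r * (ib (-p - int r) (q - r) * ib Z (J - r - (q - r))) else 0)"
      proof (cases "r \<le> q")
        case True
        then have "J - r - (q - r) = J - q" by simp
        with True B_trin[OF True, of "-p"] show ?thesis by (simp add: mult_ac)
      qed (simp add: B_nat_gt)
    qed
    also have "\<dots> = (\<Sum>r\<le>I. \<Sum>q\<le>J. (if r \<le> q then ib p (I-r) * ib (-p) r * (ib (-p - int r) (q - r) * ib Z (J - r - (q - r))) else 0))"
      by (rule sum.swap)
    also have "\<dots> = (\<Sum>r\<le>I. (if r \<le> J then ib p (I-r) * ib (-p) r * (\<Sum>s\<le>J-r. ib (-p - int r) s * ib Z (J - r - s)) else 0))"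
    proof (rule sum.cong[OF refl])
      fix r
      show "(\<Sum>q\<le>J. (if r \<le> q then ib p (I-r) * ib (-p) r * (ib (-p - int r) (q - r) * ib Z (J - r - (q - r))) else 0))
        = (if r \<le> J then ib p (I-r) * ib (-p) r * (\<Sum>s\<le>J-r. ib (-p - int r) s * ib Z (J - r - s)) else 0)"
        using tri_cond[where r=r and J=J and h="\<lambda>s. ib p (I-r) * ib (-p) r * (ib (-p - int r) s * ib Z (J - r - s))"]
        by (simp add: sum_distrib_left)
    qed
    also have "\<dots> = (\<Sum>r\<le>I. (if r \<le> J then ib p (I-r) * ib (-p) r * ib (Z - p - int r) (J-r) else 0))"
      by (simp only: B_vand) (simp add: algebra_simps cong: if_cong)
    also have "\<dots> = M" unfolding M_def by (rule sum_min_cond)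
    finally show ?thesis .
  qed
  have L: "(\<Sum>q\<le>min I J. ib p (I-q) * ib (Z - int I - p) (J-q) * ib (int q - int I) q) = M"
  proof -
    let ?N = "min I J"
    have "(\<Sum>q\<le>?N. ib p (I-q) * ib (Z - int I - p) (J-q) * ib (int q - int I) q)
        = (\<Sum>q\<le>?N. \<Sum>r\<le>q. ib (-p) r * (ib p (I-q) * ib (p - int I + int q) (q - r)) * ib (Z - int I - p) (J-q))"
    proof (rule sum.cong[OF refl])
      fix q
      have "ib (int q - int I) q = (\<Sum>r\<le>q. ib (-p) r * ib (p - int I + int q) (q - r))"
        using B_vand[where n=q and a="-p" and b="p - int I + int q"] by simp
      then show "ib p (I-q) * ib (Z - int I - p) (J-q) * ib (int q - int I) q = (\<Sum>r\<le>q. ib (-p) r * (ib p (I-q) * ib (p - int I + int q) (q - r)) * ib (Z - int I - p) (J-q))"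
        by (simp add: sum_distrib_left sum_distrib_right mult_ac)
    qed
    also have "\<dots> = (\<Sum>q\<le>?N. \<Sum>r\<le>q. ib p (I-r) * ib (-p) r * (ib (int (I-r)) (q-r) * ib (Z - int I - p) (J-q)))"
    proof (intro sum.cong refl)
      fix q r assume q: "q \<in> {..?N}" and r: "r \<in> {..q}"
      then have rq: "r \<le> q" "q \<le> I" by auto
      have t: "ib p (I-r) * ib (int (I-r)) (I-q) = ib p (I-q) * ib (p - int (I-q)) ((I-r)-(I-q))"
        using B_trin[where k="I-q" and m="I-r" and a=p] rq by simp
      have e1: "ib (int (I-r)) (I-q) = ib (int (I-r)) (q-r)"
        using B_nat_sym[of "I-q" "I-r"] rq by simp
      have e2: "(I-r)-(I-q) = q - r" "p - int (I-q) = p - int I + int q" using rq by auto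
      have key: "ib p (I-q) * ib (p - int I + int q) (q - r) = ib p (I-r) * ib (int (I-r)) (q-r)"
        using t unfolding e1 e2 by simp
      show "ib (-p) r * (ib p (I-q) * ib (p - int I + int q) (q - r)) * ib (Z - int I - p) (J-q) =
          ib p (I-r) * ib (-p) r * (ib (int (I-r)) (q-r) * ib (Z - int I - p) (J-q))"
        unfolding key by (simp add: mult_ac)
    qed
    also have "\<dots> = (\<Sum>r\<le>?N. \<Sum>s\<le>?N-r. ib p (I-r) * ib (-p) r * (ib (int (I-r)) (r+s-r) * ib (Z - int I - p) (J-(r+s))))"
      by (rule tri_swap)
    also have "\<dots> = (\<Sum>r\<le>?N. ib p (I-r) * ib (-p) r * (\<Sum>s\<le>J-r. ib (int (I-r)) s * ib (Z - int I - p) (J-r-s)))"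
    proof (rule sum.cong[OF refl])
      fix r assume r: "r \<in> {..?N}"
      have "(\<Sum>s\<le>?N-r. ib p (I-r) * ib (-p) r * (ib (int (I-r)) s * ib (Z - int I - p) (J-r-s))) = (\<Sum>s\<le>J-r. ib p (I-r) * ib (-p) r * (ib (int (I-r)) s * ib (Z - int I - p) (J-r-s)))"
        by (rule sum.mono_neutral_left) (auto simp: B_nat_gt)
      then show "(\<Sum>s\<le>?N-r. ib p (I-r) * ib (-p) r * (ib (int (I-r)) (r+s-r) * ib (Z - int I - p) (J-(r+s)))) =
         ib p (I-r) * ib (-p) r * (\<Sum>s\<le>J-r. ib (int (I-r)) s * ib (Z - int I - p) (J-r-s))"
        by (simp add: sum_distrib_left diff_diff_add)
    qed
    also have "\<dots> = M" unfolding M_def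
    proof (rule sum.cong[OF refl])
      fix r assume "r \<in> {..?N}"
      then have "int (I - r) + (Z - int I - p) = Z - p - int r" by auto
      moreover have "(\<Sum>s\<le>J-r. ib (int (I-r)) s * ib (Z - int I - p) (J-r-s)) = ib (int (I-r) + (Z - int I - p)) (J - r)"
        by (rule B_vand)
      ultimately show "ib p (I-r) * ib (-p) r * (\<Sum>s\<le>J-r. ib (int (I-r)) s * ib (Z - int I - p) (J-r-s)) =
          ib p (I-r) * ib (-p) r * ib (Z - p - int r) (J-r)"
        by simp
    qed
    finally show ?thesis .
  qed
  from L R show ?thesis by simp
qed

lemma star1: fixes i q :: nat and p :: int shows
  "ib p i * ib (int i - p) q = (\<Sum>l\<le>min i q. ib p (i-l) * ib (-p) (q-l) * ib (p - int i + int l) l)"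
proof -
  have "(\<Sum>l\<le>min i q. ib p (i-l) * ib (-p) (q-l) * ib (p - int i + int l) l)
      = (\<Sum>l\<le>min i q. ib p i * (ib (int i) l * ib (-p) (q-l)))"
  proof (rule sum.cong[OF refl])
    fix l assume "l \<in> {..min i q}"
    then have li: "l \<le> i" by simp
    have t: "ib p i * ib (int i) (i-l) = ib p (i-l) * ib (p - int (i-l)) (i - (i-l))"
      using B_trin[where k="i-l" and m=i and a=p] li by simp
    have e: "ib (int i) (i-l) = ib (int i) l" "i - (i-l) = l" "p - int (i-l) = p - int i + int l"
      using B_nat_sym[of l i] li by auto
    show "ib p (i-l) * ib (-p) (q-l) * ib (p - int i + int l) l = ib p i * (ib (int i) l * ib (-p) (q-l))"
      using t unfolding e by (simp add: mult_ac)
  qed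
  also have "\<dots> = ib p i * (\<Sum>l\<le>min i q. ib (int i) l * ib (-p) (q-l))"
    by (simp add: sum_distrib_left)
  also have "(\<Sum>l\<le>min i q. ib (int i) l * ib (-p) (q-l)) = (\<Sum>l\<le>q. ib (int i) l * ib (-p) (q-l))"
    by (rule sum.mono_neutral_left) (auto simp: B_nat_gt)
  also have "\<dots> = ib (int i - p) q" using B_vand[where n=q and a="int i" and b="-p"] by simp
  finally show ?thesis by simp
qed

lemma star2: fixes i q :: nat and p :: int shows
  "ib (-p) q * ib (p + int q) i = (\<Sum>l\<le>min i q. ib p (i-l) * ib (-p) (q-l) * ib (-p - int (q-l)) l)"
proof -
  have v: "ib (p + int q) i = (\<Sum>l\<le>i. ib (int q) l * ib p (i-l))"
    using B_vand[where n=i and a="int q" and b=p] by (simp add: add.commute)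
  have "ib (-p) q * ib (p + int q) i = (\<Sum>l\<le>i. ib p (i-l) * (ib (-p) q * ib (int q) l))"
    unfolding v sum_distrib_left by (simp add: mult_ac)
  also have "\<dots> = (\<Sum>l\<le>i. (if l \<le> q then ib p (i-l) * ib (-p) (q-l) * ib (-p - int (q-l)) l else 0))"
  proof (rule sum.cong[OF refl])
    fix l
    show "ib p (i-l) * (ib (-p) q * ib (int q) l) = (if l \<le> q then ib p (i-l) * ib (-p) (q-l) * ib (-p - int (q-l)) l else 0)"
    proof (cases "l \<le> q")
      case True
      have t: "ib (-p) q * ib (int q) (q-l) = ib (-p) (q-l) * ib (-p - int (q-l)) (q - (q-l))"
        using B_trin[where k="q-l" and m=q and a="-p"] True by simp
      have e: "ib (int q) (q-l) = ib (int q) l" "q - (q-l) = l"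
        using B_nat_sym[of l q] True by auto
      show ?thesis using t True unfolding e by (simp add: mult_ac)
    qed (simp add: B_nat_gt)
  qed
  also have "\<dots> = (\<Sum>l\<le>min i q. ib p (i-l) * ib (-p) (q-l) * ib (-p - int (q-l)) l)"
    by (rule sum_min_cond)
  finally show ?thesis .
qed

lemma I2c: fixes \<alpha> \<beta> :: nat and p W :: int shows
  "(\<Sum>j\<le>min \<alpha> \<beta>. ib (W + int \<alpha> - int \<beta>) j * (ib p (\<alpha>-j) * ib (int (\<alpha>-j) - p) (\<beta>-j)))
   = (\<Sum>j\<le>min \<alpha> \<beta>. ib (W + 2*p) j * (ib (-p) (\<beta>-j) * ib (p + int (\<beta>-j)) (\<alpha>-j)))"
proof -
  let ?N = "min \<alpha> \<beta>"
  define c where "c m = ib p (\<alpha>-m) * ib (-p) (\<beta>-m)" for m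
  have L: "(\<Sum>j\<le>?N. ib (W + int \<alpha> - int \<beta>) j * (ib p (\<alpha>-j) * ib (int (\<alpha>-j) - p) (\<beta>-j)))
     = (\<Sum>m\<le>?N. c m * ib (W + p - int \<beta> + int m) m)"
  proof -
    have "(\<Sum>j\<le>?N. ib (W + int \<alpha> - int \<beta>) j * (ib p (\<alpha>-j) * ib (int (\<alpha>-j) - p) (\<beta>-j)))
      = (\<Sum>j\<le>?N. \<Sum>l\<le>?N-j. ib (W + int \<alpha> - int \<beta>) j * (c (j+l) * ib (p - int \<alpha> + int (j + l)) l))"
    proof (rule sum.cong[OF refl])
      fix j assume j: "j \<in> {..?N}"
      have m: "min (\<alpha>-j) (\<beta>-j) = ?N - j" by auto
      show "ib (W + int \<alpha> - int \<beta>) j * (ib p (\<alpha>-j) * ib (int (\<alpha>-j) - p) (\<beta>-j)) =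
        (\<Sum>l\<le>?N-j. ib (W + int \<alpha> - int \<beta>) j * (c (j+l) * ib (p - int \<alpha> + int (j + l)) l))"
        unfolding star1 m sum_distrib_left
      proof (rule sum.cong[OF refl])
        fix l assume "l \<in> {..?N - j}"
        then have "j + l \<le> \<alpha>" "j + l \<le> \<beta>" using j by auto
        then have e: "\<alpha> - j - l = \<alpha> - (j+l)" "\<beta> - j - l = \<beta> - (j+l)" "p - int (\<alpha> - j) + int l = p - int \<alpha> + int (j+l)"
          by auto
        then show "ib (W + int \<alpha> - int \<beta>) j * (ib p (\<alpha> - j - l) * ib (- p) (\<beta> - j - l) * ib (p - int (\<alpha> - j) + int l) l) =
           ib (W + int \<alpha> - int \<beta>) j * (c (j + l) * ib (p - int \<alpha> + int (j + l)) l)"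
          unfolding c_def e by (simp only: mult_ac)
      qed
    qed
    also have "\<dots> = (\<Sum>m\<le>?N. \<Sum>j\<le>m. ib (W + int \<alpha> - int \<beta>) j * (c (j + (m-j)) * ib (p - int \<alpha> + int (j + (m-j))) (m-j)))"
      by (rule tri1)
    also have "\<dots> = (\<Sum>m\<le>?N. c m * (\<Sum>j\<le>m. ib (W + int \<alpha> - int \<beta>) j * ib (p - int \<alpha> + int m) (m-j)))"
      by (intro sum.cong refl) (auto simp: sum_distrib_left mult_ac)
    also have "\<dots> = (\<Sum>m\<le>?N. c m * ib (W + p - int \<beta> + int m) m)"
    proof (intro sum.cong refl)
      fix m
      show "c m * (\<Sum>j\<le>m. ib (W + int \<alpha> - int \<beta>) j * ib (p - int \<alpha> + int m) (m-j)) = c m * ib (W + p - int \<beta> + int m) m"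
        using B_vand[where n=m and a="W + int \<alpha> - int \<beta>" and b="p - int \<alpha> + int m"] by (simp add: algebra_simps)
    qed
    finally show ?thesis .
  qed
  have R: "(\<Sum>j\<le>?N. ib (W + 2*p) j * (ib (-p) (\<beta>-j) * ib (p + int (\<beta>-j)) (\<alpha>-j)))
     = (\<Sum>m\<le>?N. c m * ib (W + p - int \<beta> + int m) m)"
  proof -
    have "(\<Sum>j\<le>?N. ib (W + 2*p) j * (ib (-p) (\<beta>-j) * ib (p + int (\<beta>-j)) (\<alpha>-j)))
      = (\<Sum>j\<le>?N. \<Sum>l\<le>?N-j. ib (W + 2*p) j * (c (j+l) * ib (-p - int \<beta> + int (j + l)) l))"
    proof (rule sum.cong[OF refl])
      fix j assume j: "j \<in> {..?N}"
      have m: "min (\<alpha>-j) (\<beta>-j) = ?N - j" by auto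
      show "ib (W + 2*p) j * (ib (-p) (\<beta>-j) * ib (p + int (\<beta>-j)) (\<alpha>-j)) =
        (\<Sum>l\<le>?N-j. ib (W + 2*p) j * (c (j+l) * ib (-p - int \<beta> + int (j + l)) l))"
        unfolding star2 m sum_distrib_left
      proof (rule sum.cong[OF refl])
        fix l assume "l \<in> {..?N - j}"
        then have "j + l \<le> \<alpha>" "j + l \<le> \<beta>" using j by auto
        then have e: "\<alpha> - j - l = \<alpha> - (j+l)" "\<beta> - j - l = \<beta> - (j+l)" "-p - int (\<beta> - j - l) = -p - int \<beta> + int (j+l)"
          by auto
        then show "ib (W + 2*p) j * (ib p (\<alpha> - j - l) * ib (- p) (\<beta> - j - l) * ib (- p - int (\<beta> - j - l)) l) =
           ib (W + 2*p) j * (c (j + l) * ib (-p - int \<beta> + int (j + l)) l)"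
          unfolding c_def e by (simp only: mult_ac)
      qed
    qed
    also have "\<dots> = (\<Sum>m\<le>?N. \<Sum>j\<le>m. ib (W + 2*p) j * (c (j + (m-j)) * ib (-p - int \<beta> + int (j + (m-j))) (m-j)))"
      by (rule tri1)
    also have "\<dots> = (\<Sum>m\<le>?N. c m * (\<Sum>j\<le>m. ib (W + 2*p) j * ib (-p - int \<beta> + int m) (m-j)))"
      by (intro sum.cong refl) (auto simp: sum_distrib_left mult_ac)
    also have "\<dots> = (\<Sum>m\<le>?N. c m * ib (W + p - int \<beta> + int m) m)"
    proof (intro sum.cong refl)
      fix m
      show "c m * (\<Sum>j\<le>m. ib (W + 2*p) j * ib (-p - int \<beta> + int m) (m-j)) = c m * ib (W + p - int \<beta> + int m) m"
        using B_vand[where n=m and a="W + 2*p" and b="-p - int \<beta> + int m"] by (simp add: algebra_simps)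
    qed
    finally show ?thesis .
  qed
  from L R show ?thesis by simp
qed



lemma RB1: fixes r a :: nat shows
  "(\<Sum>i\<le>r. \<Sum>q\<le>a. \<Sum>j\<le>min (a-q) (r-i). F i q j) = (\<Sum>\<alpha>\<le>r. \<Sum>\<beta>\<le>a. \<Sum>j\<le>min \<alpha> \<beta>. F (\<alpha>-j) (\<beta>-j) j)"
proof -
  have "(\<Sum>i\<le>r. \<Sum>q\<le>a. \<Sum>j\<le>min (a-q) (r-i). F i q j) = (\<Sum>(i,q,j)\<in>Sigma {..r} (\<lambda>i. Sigma {..a} (\<lambda>q. {..min (a-q) (r-i)})). F i q j)"
    by (simp add: sum.Sigma)
  also have "\<dots> = (\<Sum>(\<alpha>,\<beta>,j)\<in>Sigma {..r} (\<lambda>\<alpha>. Sigma {..a} (\<lambda>\<beta>. {..min \<alpha> \<beta>})). F (\<alpha>-j) (\<beta>-j) j)"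
    apply (rule sum.reindex_bij_witness[where i="\<lambda>(\<alpha>,\<beta>,j). (\<alpha>-j,\<beta>-j,j)" and j="\<lambda>(i,q,j). (i+j,q+j,j)"])
    apply auto
    done
  also have "\<dots> = (\<Sum>\<alpha>\<le>r. \<Sum>\<beta>\<le>a. \<Sum>j\<le>min \<alpha> \<beta>. F (\<alpha>-j) (\<beta>-j) j)"
    by (simp add: sum.Sigma)
  finally show ?thesis .
qed

lemma RB2: fixes r a :: nat shows
  "(\<Sum>j\<le>min a r. \<Sum>q\<le>a-j. \<Sum>i\<le>r-j. F i q j) = (\<Sum>\<alpha>\<le>r. \<Sum>\<beta>\<le>a. \<Sum>j\<le>min \<alpha> \<beta>. F (\<alpha>-j) (\<beta>-j) j)"
proof -
  have "(\<Sum>j\<le>min a r. \<Sum>q\<le>a-j. \<Sum>i\<le>r-j. F i q j) = (\<Sum>(j,q,i)\<in>Sigma {..min a r} (\<lambda>j. Sigma {..a-j} (\<lambda>q. {..r-j})). F i q j)"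
    by (simp add: sum.Sigma)
  also have "\<dots> = (\<Sum>(\<alpha>,\<beta>,j)\<in>Sigma {..r} (\<lambda>\<alpha>. Sigma {..a} (\<lambda>\<beta>. {..min \<alpha> \<beta>})). F (\<alpha>-j) (\<beta>-j) j)"
    apply (rule sum.reindex_bij_witness[where i="\<lambda>(\<alpha>,\<beta>,j). (j,\<beta>-j,\<alpha>-j)" and j="\<lambda>(j,q,i). (i+j,q+j,j)"])
    apply auto
    done
  also have "\<dots> = (\<Sum>\<alpha>\<le>r. \<Sum>\<beta>\<le>a. \<Sum>j\<le>min \<alpha> \<beta>. F (\<alpha>-j) (\<beta>-j) j)"
    by (simp add: sum.Sigma)
  finally show ?thesis .
qed



lemma RA: fixes a :: nat shows
  "(\<Sum>q\<le>a. \<Sum>k\<le>a-q. \<Sum>j\<le>a-q-k. F q k j) = (\<Sum>k\<le>a. \<Sum>j\<le>a-k. \<Sum>q\<le>a-k-j. F q k j)"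
proof -
  have "(\<Sum>q\<le>a. \<Sum>k\<le>a-q. \<Sum>j\<le>a-q-k. F q k j) = (\<Sum>(q,k,j)\<in>Sigma {..a} (\<lambda>q. Sigma {..a-q} (\<lambda>k. {..a-q-k})). F q k j)"
    by (simp add: sum.Sigma)
  also have "\<dots> = (\<Sum>(k,j,q)\<in>Sigma {..a} (\<lambda>k. Sigma {..a-k} (\<lambda>j. {..a-k-j})). F q k j)"
    apply (rule sum.reindex_bij_witness[where i="\<lambda>(k,j,q). (q,k,j)" and j="\<lambda>(q,k,j). (k,j,q)"])
    apply auto
    done
  also have "\<dots> = (\<Sum>k\<le>a. \<Sum>j\<le>a-k. \<Sum>q\<le>a-k-j. F q k j)"
    by (simp add: sum.Sigma)
  finally show ?thesis .
qed

lemma RL4: fixes a D :: nat shows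
  "(\<Sum>i\<le>D. \<Sum>k\<le>a. \<Sum>j\<le>a-k. \<Sum>q\<le>k. F i k j q) =
   (\<Sum>I\<le>D+a. \<Sum>K\<le>a. \<Sum>T\<le>a-K. \<Sum>q\<in>{q. q\<le>a-K-T \<and> q\<le>I \<and> I-q\<le>D}. F (I-q) (K+q) (a-K-T-q) q)"
proof -
  have "(\<Sum>i\<le>D. \<Sum>k\<le>a. \<Sum>j\<le>a-k. \<Sum>q\<le>k. F i k j q) =
     (\<Sum>(i,k,j,q)\<in>Sigma {..D} (\<lambda>i. Sigma {..a} (\<lambda>k. Sigma {..a-k} (\<lambda>j. {..k}))). F i k j q)"
    by (simp add: sum.Sigma)
  also have "\<dots> = (\<Sum>(I,K,T,q)\<in>Sigma {..D+a} (\<lambda>I. Sigma {..a} (\<lambda>K. Sigma {..a-K} (\<lambda>T. {q. q\<le>a-K-T \<and> q\<le>I \<and> I-q\<le>D}))).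
       F (I-q) (K+q) (a-K-T-q) q)"
    apply (rule sum.reindex_bij_witness[where i="\<lambda>(I,K,T,q). (I-q, K+q, a-K-T-q, q)" and j="\<lambda>(i,k,j,q). (i+q, k-q, a-k-j, q)"])
    apply auto
    done
  also have "\<dots> = (\<Sum>I\<le>D+a. \<Sum>K\<le>a. \<Sum>T\<le>a-K. \<Sum>q\<in>{q. q\<le>a-K-T \<and> q\<le>I \<and> I-q\<le>D}. F (I-q) (K+q) (a-K-T-q) q)"
    by (simp add: sum.Sigma)
  finally show ?thesis .
qed

lemma RR4: fixes a E :: nat shows
  "(\<Sum>k\<le>a. \<Sum>j\<le>a-k. \<Sum>q\<le>a-k-j. \<Sum>i\<le>E. F k j q i) =
   (\<Sum>I\<le>E. \<Sum>K\<le>a. \<Sum>T\<le>a-K. \<Sum>q\<le>a-K-T. F K (a-K-T-q) q I)"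
proof -
  have "(\<Sum>k\<le>a. \<Sum>j\<le>a-k. \<Sum>q\<le>a-k-j. \<Sum>i\<le>E. F k j q i) =
     (\<Sum>(k,j,q,i)\<in>Sigma {..a} (\<lambda>k. Sigma {..a-k} (\<lambda>j. Sigma {..a-k-j} (\<lambda>q. {..E}))). F k j q i)"
    by (simp add: sum.Sigma)
  also have "\<dots> = (\<Sum>(I,K,T,q)\<in>Sigma {..E} (\<lambda>I. Sigma {..a} (\<lambda>K. Sigma {..a-K} (\<lambda>T. {..a-K-T}))). F K (a-K-T-q) q I)"
    apply (rule sum.reindex_bij_witness[where i="\<lambda>(I,K,T,q). (K, a-K-T-q, q, I)" and j="\<lambda>(k,j,q,i). (i, k, a-k-j-q, q)"])
    apply auto
    done
  also have "\<dots> = (\<Sum>I\<le>E. \<Sum>K\<le>a. \<Sum>T\<le>a-K. \<Sum>q\<le>a-K-T. F K (a-K-T-q) q I)"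
    by (simp add: sum.Sigma)
  finally show ?thesis .
qed

lemma sum_last: "(\<And>j. j < m \<Longrightarrow> f j = 0) \<Longrightarrow> (\<Sum>j\<le>(m::nat). f j) = f m"
  by (subst sum.mono_neutral_right[of "{..m}" "{m}"]) auto

lemma sum_rev: "(\<Sum>k\<le>(a::nat). f k) = (\<Sum>j\<le>a. f (a - j))"
  by (rule sum.reindex_bij_witness[where i="\<lambda>j. a - j" and j="\<lambda>k. a - k"]) auto

lemma chi_neg: "(-1)^j * ibinom X j = (ibinom (int j - X - 1) j :: 'k::comm_ring_1)"
proof -
  have "(-1)^j * ib X j = ib (int j - X - 1) j" by (rule B_neg)
  then have "(of_int ((-1)^j * ib X j) :: 'k) = of_int (ib (int j - X - 1) j)" by simp
  then show ?thesis by (simp add: ibinom_ib)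
qed



lemma fsum_eq: "finite A \<Longrightarrow> (\<And>i. i \<notin> A \<Longrightarrow> f i = 0) \<Longrightarrow> fsum f = sum f A"
  unfolding fsum_def by (rule sum.mono_neutral_cong_left) auto

lemma fsum_single: "(\<And>i. i \<noteq> 0 \<Longrightarrow> f i = 0) \<Longrightarrow> fsum f = f 0"
  using fsum_eq[of "{0}" f] by auto

lemma additive_sum: fixes f :: "'a::ab_group_add \<Rightarrow> 'b::ab_group_add" shows "(\<And>x y. f (x + y) = f x + f y) \<Longrightarrow> f (sum g A) = (\<Sum>a\<in>A. f (g a))"
proof -
  assume "\<And>x y. f (x + y) = f x + f y"
  then interpret additive f by unfold_locales
  show ?thesis by (rule sum)
qed

lemma additive_zero: fixes f :: "'a::ab_group_add \<Rightarrow> 'b::ab_group_add" shows "(\<And>x y. f (x + y) = f x + f y) \<Longrightarrow> f 0 = 0"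
proof -
  assume "\<And>x y. f (x + y) = f x + f y"
  then interpret additive f by unfold_locales
  show ?thesis by (rule zero)
qed

lemma additive_diff: fixes f :: "'a::ab_group_add \<Rightarrow> 'b::ab_group_add" shows "(\<And>x y. f (x + y) = f x + f y) \<Longrightarrow> f (x - y) = f x - f y"
proof -
  assume "\<And>x y. f (x + y) = f x + f y"
  then interpret additive f by unfold_locales
  show ?thesis by (rule diff)
qed

lemma sep_aux:
  fixes x y :: int
  assumes eq: "\<forall>r. (ibinom x r :: 'k::field) = ibinom y r" and lt: "y < x"
  shows False
proof -
  define d where "d = x - y"
  have xd: "x = d + y" unfolding d_def by simp
  have vand: "(ibinom x r :: 'k) = (\<Sum>i\<le>r. of_int (ib d i) * ibinom y (r - i))" for r
    unfolding xd ibinom_ib B_vand[symmetric] by simp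
  have z: "(of_int (ib d (Suc r')) :: 'k) = 0" for r'
  proof (induction r' rule: less_induct)
    case (less r')
    have "(\<Sum>i\<le>Suc r'. of_int (ib d i) * ibinom y (Suc r' - i)) = (ibinom y (Suc r') :: 'k)"
      using eq vand[of "Suc r'"] by simp
    then have "(of_int (ib d 0) * ibinom y (Suc r' - 0) :: 'k) + (\<Sum>i\<le>r'. of_int (ib d (Suc i)) * ibinom y (Suc r' - Suc i)) = ibinom y (Suc r')"
      by (simp only: sum.atMost_Suc_shift)
    then have "(\<Sum>i\<le>r'. (of_int (ib d (Suc i)) :: 'k) * ibinom y (Suc r' - Suc i)) = 0"
      by simp
    moreover have "(\<Sum>i\<le>r'. (of_int (ib d (Suc i)) :: 'k) * ibinom y (Suc r' - Suc i)) = of_int (ib d (Suc r'))"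
    proof -
      have "(\<Sum>i\<le>r'. (of_int (ib d (Suc i)) :: 'k) * ibinom y (Suc r' - Suc i)) =
         (\<Sum>i<r'. (of_int (ib d (Suc i)) :: 'k) * ibinom y (Suc r' - Suc i)) + of_int (ib d (Suc r')) * ibinom y 0"
        by (simp add: lessThan_Suc_atMost[symmetric])
      also have "(\<Sum>i<r'. (of_int (ib d (Suc i)) :: 'k) * ibinom y (Suc r' - Suc i)) = 0"
        using less by simp
      finally show ?thesis by (simp add: ibinom_ib)
    qed
    ultimately show ?case by simp
  qed
  have "d > 0" using lt d_def by simp
  then obtain r' where r': "nat d = Suc r'" using not0_implies_Suc by fastforce
  have "d = int (Suc r')" using r' \<open>d > 0\<close> by simp
  then have "ib d (Suc r') = 1" using B_nn[of "Suc r'"] by simp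
  with z[of r'] show False by simp
qed

lemma sep:
  fixes x y :: int
  assumes eq: "\<forall>r. (ibinom x r :: 'k::field) = ibinom y r"
  shows "x = y"
proof -
  have "\<not> y < x" using sep_aux[OF eq] by blast
  moreover have "\<not> x < y" using sep_aux[of y x] eq by (metis (full_types))
  ultimately show ?thesis by simp
qed

lemma box_diag: fixes s r :: nat shows "(\<Sum>i\<le>s. \<Sum>j\<le>r. F i j) = (\<Sum>t\<le>r+s. \<Sum>i\<in>{i. i\<le>s \<and> i\<le>t \<and> t-i\<le>r}. F i (t-i))"
proof -
  have "(\<Sum>i\<le>s. \<Sum>j\<le>r. F i j) = (\<Sum>(i,j)\<in>{..s}\<times>{..r}. F i j)"
    by (simp add: sum.cartesian_product)
  also have "\<dots> = (\<Sum>(t,i)\<in>Sigma {..r+s} (\<lambda>t. {i. i\<le>s \<and> i\<le>t \<and> t-i\<le>r}). F i (t-i))"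
    apply (rule sum.reindex_bij_witness[where i="\<lambda>(t,i). (i, t-i)" and j="\<lambda>(i,j). (i+j, i)"])
    apply auto
    done
  also have "\<dots> = (\<Sum>t\<le>r+s. \<Sum>i\<in>{i. i\<le>s \<and> i\<le>t \<and> t-i\<le>r}. F i (t-i))"
    by (rule sum.Sigma[symmetric]) auto
  finally show ?thesis .
qed

lemma G1_coef:
  assumes t: "t \<le> r + s"
  shows "(\<Sum>i\<in>{i. i\<le>s \<and> i\<le>t \<and> t-i\<le>r}. ib q i * ib (q - int i) (t - i) * int ((r - (t - i) + (s - i)) choose (r - (t - i))))
     = ib q t * int ((r + s) choose r)"
proof -
  let ?A = "{i. i\<le>s \<and> i\<le>t \<and> t-i\<le>r}"
  have "(\<Sum>i\<in>?A. ib q i * ib (q - int i) (t - i) * int ((r - (t - i) + (s - i)) choose (r - (t - i))))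
      = (\<Sum>i\<in>?A. ib q t * int ((t choose i) * ((r + s - t) choose (s - i))))"
  proof (rule sum.cong[OF refl])
    fix i assume "i \<in> ?A"
    then have i: "i \<le> s" "i \<le> t" "t - i \<le> r" by auto
    have "ib q t * ib (int t) i = ib q i * ib (q - int i) (t - i)" using B_trin[OF i(2)] by simp
    moreover have "r - (t - i) + (s - i) = r + s - t" using i by auto
    moreover have "(r + s - t) choose (r - (t - i)) = (r + s - t) choose (s - i)"
      using i binomial_symmetric[of "s - i" "r + s - t"] by (simp add: algebra_simps)
    ultimately show "ib q i * ib (q - int i) (t - i) * int ((r - (t - i) + (s - i)) choose (r - (t - i))) =
        ib q t * int ((t choose i) * ((r + s - t) choose (s - i)))"
      by (simp add: B_nat)
  qed
  also have "\<dots> = ib q t * int (\<Sum>i\<in>?A. (t choose i) * ((r + s - t) choose (s - i)))"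
    by (simp add: sum_distrib_left)
  also have "(\<Sum>i\<in>?A. (t choose i) * ((r + s - t) choose (s - i))) = (\<Sum>i\<in>{0..s}. (t choose i) * ((r + s - t) choose (s - i)))"
    using t by (intro sum.mono_neutral_left) auto
  also have "\<dots> = (t + (r + s - t)) choose s" by (rule binomial_Vandermonde)
  also have "\<dots> = (r + s) choose r" using t binomial_symmetric[of r "r + s"] by simp
  finally show ?thesis .
qed

locale HVA =
  fixes scg :: "'k::field \<Rightarrow> 'g::ab_group_add \<Rightarrow> 'g"
    and br :: "'g \<Rightarrow> 'g \<Rightarrow> 'g" and fm :: "'g \<Rightarrow> 'g \<Rightarrow> 'k" and ell :: 'k
    and sc :: "'k \<Rightarrow> 'v::ab_group_add \<Rightarrow> 'v"
    and rho :: "'g \<Rightarrow> int \<Rightarrow> 'v \<Rightarrow> 'v" and one :: 'v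
    and Y :: "'v \<Rightarrow> int \<Rightarrow> 'v \<Rightarrow> 'v"
    and Lm L0 L1 :: "nat \<Rightarrow> 'v \<Rightarrow> 'v"
  assumes vac: "affine_vacuum_module scg br fm ell sc rho one"
    and va: "vertex_algebra sc Y one"
    and Yrho: "\<forall>a n w. Y (rho a (-1) one) n w = rho a n w"
    and HA: "H_action_induced sc rho one Lm L0 L1"
begin

lemma msc: "module sc" using va unfolding vertex_algebra_def by (elim conjE) simp

sublocale module sc by (rule msc)

lemma vacD: "module sc \<and>
     aff_rep scg br fm ell UNIV (+) sc rho \<and>
     (\<forall>a n. n \<ge> 0 \<longrightarrow> rho a n one = 0) \<and>
     (\<forall>v. generated_by_vac sc rho one v)"
  using vac unfolding affine_vacuum_module_def by (elim conjE) (intro conjI; assumption)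

lemma aff: "aff_rep scg br fm ell UNIV (+) sc rho"
  using vacD by (elim conjE)

lemma affD: "(\<forall>a b n x. x \<in> UNIV \<longrightarrow> rho (a + b) n x = rho a n x + rho b n x) \<and>
     (\<forall>k a n x. x \<in> UNIV \<longrightarrow> rho (scg k a) n x = sc k (rho a n x)) \<and>
     (\<forall>a n x y. x \<in> UNIV \<longrightarrow> y \<in> UNIV \<longrightarrow> rho a n (x + y) = rho a n x + rho a n y) \<and>
     (\<forall>a n k x. x \<in> UNIV \<longrightarrow> rho a n (sc k x) = sc k (rho a n x)) \<and>
     (\<forall>a b m n x. x \<in> UNIV \<longrightarrow>
        rho a m (rho b n x) =
          rho b n (rho a m x) + (rho (br a b) (m + n) x +
                   sc (of_int m * (if m + n = 0 then fm a b else 0) * ell) x))"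
  using aff unfolding aff_rep_def by (elim conjE) (intro conjI; assumption)

lemma rho_add: "rho a n (x + y) = rho a n x + rho a n y"
  using affD by (elim conjE allE impE) (rule UNIV_I)+
lemma rho_sc: "rho a n (sc k x) = sc k (rho a n x)"
  using affD by (elim conjE allE impE) (rule UNIV_I)+
lemma rho_comm: "rho a m (rho b n x) = rho b n (rho a m x) + (rho (br a b) (m + n) x +
     sc (of_int m * (if m + n = 0 then fm a b else 0) * ell) x)"
  using affD by (elim conjE allE impE) (rule UNIV_I)+
lemma rho_0: "rho a n 0 = 0" by (rule additive_zero) (rule rho_add)
lemma rho_sum: "rho a n (sum g A) = (\<Sum>i\<in>A. rho a n (g i))" by (rule additive_sum) (rule rho_add)
lemma rho_diff: "rho a n (x - y) = rho a n x - rho a n y" by (rule additive_diff) (rule rho_add)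

lemma rho_one: "n \<ge> 0 \<Longrightarrow> rho a n one = 0"
  using vacD by (elim conjE allE impE)
lemma gen: "generated_by_vac sc rho one v"
  using vacD by (elim conjE allE)

lemma vaD: "(\<forall>u n v w. Y u n (v + w) = Y u n v + Y u n w) \<and>
     (\<forall>u n k w. Y u n (sc k w) = sc k (Y u n w)) \<and>
     (\<forall>u v n w. Y (u + v) n w = Y u n w + Y v n w) \<and>
     (\<forall>k u n w. Y (sc k u) n w = sc k (Y u n w)) \<and>
     (\<forall>u w. \<exists>N. \<forall>n\<ge>N. Y u n w = 0) \<and>
     (\<forall>n w. Y one n w = (if n = -1 then w else 0)) \<and>
     (\<forall>u n. n \<ge> 0 \<longrightarrow> Y u n one = 0) \<and>
     (\<forall>u. Y u (-1) one = u) \<and>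
     (\<forall>u v w l m n.
        fsum (\<lambda>i. sc (ibinom m i) (Y (Y u (l + int i) v) (m + n - int i) w)) =
        fsum (\<lambda>i. sc ((-1) ^ i * ibinom l i)
                   (Y u (l + m - int i) (Y v (n + int i) w)
                    - sc (if even l then 1 else -1) (Y v (l + n - int i) (Y u (m + int i) w)))))"
  using va unfolding vertex_algebra_def by (elim conjE) (intro conjI; assumption)

lemma Y_add2: "Y u n (v + w) = Y u n v + Y u n w" using vaD by (elim conjE allE)
lemma Y_sc2: "Y u n (sc k w) = sc k (Y u n w)" using vaD by (elim conjE allE)
lemma Y_add1: "Y (u + v) n w = Y u n w + Y v n w" using vaD by (elim conjE allE)
lemma Y_sc1: "Y (sc k u) n w = sc k (Y u n w)" using vaD by (elim conjE allE)
lemma Y_trunc: "\<exists>N. \<forall>n\<ge>N. Y u n w = 0" using vaD by (elim conjE allE)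
lemma Y_one: "Y one n w = (if n = -1 then w else 0)" using vaD by (elim conjE allE)
lemma Y_cre: "n \<ge> 0 \<Longrightarrow> Y u n one = 0" using vaD by (elim conjE allE impE)
lemma Y_m1: "Y u (-1) one = u" using vaD by (elim conjE allE)
lemma Bor: "fsum (\<lambda>i. sc (ibinom m i) (Y (Y u (l + int i) v) (m + n - int i) w)) =
        fsum (\<lambda>i. sc ((-1) ^ i * ibinom l i)
                   (Y u (l + m - int i) (Y v (n + int i) w)
                    - sc (if even l then 1 else -1) (Y v (l + n - int i) (Y u (m + int i) w))))"
  using vaD by (elim conjE allE)

lemma Y_sum2: "Y u n (sum g A) = (\<Sum>i\<in>A. Y u n (g i))" by (rule additive_sum) (rule Y_add2)
lemma Y_sum1: "Y (sum g A) n w = (\<Sum>i\<in>A. Y (g i) n w)" by (rule additive_sum[where f="\<lambda>u. Y u n w"]) (rule Y_add1)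
lemma Y_02: "Y u n 0 = 0" by (rule additive_zero) (rule Y_add2)
lemma Y_01: "Y 0 n w = 0" by (rule additive_zero[where f="\<lambda>u. Y u n w"]) (rule Y_add1)
lemma Y_diff2: "Y u n (x - y) = Y u n x - Y u n y" by (rule additive_diff) (rule Y_add2)

definition cc :: "'g \<Rightarrow> 'v" where "cc a = rho a (-1) one"
lemma Ycc: "Y (cc a) n w = rho a n w" using Yrho unfolding cc_def by blast

lemma HL: "\<forall>L \<in> {Lm, L0, L1}. \<forall>r u v k.
        L r (u + v) = L r u + L r v \<and> L r (sc k v) = sc k (L r v) \<and>
        L r one = (if r = 0 then one else 0)"
  using HA unfolding H_action_induced_def by blast

lemma L1_add: "L1 r (u + v) = L1 r u + L1 r v" using HL by simp
lemma L1_sc: "L1 r (sc k v) = sc k (L1 r v)" using HL by simp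
lemma L1_one: "L1 r one = (if r = 0 then one else 0)" using HL by simp
lemma Lm_add: "Lm r (u + v) = Lm r u + Lm r v" using HL by simp
lemma Lm_sc: "Lm r (sc k v) = sc k (Lm r v)" using HL by simp
lemma Lm_one: "Lm r one = (if r = 0 then one else 0)" using HL by simp
lemma L0_add: "L0 r (u + v) = L0 r u + L0 r v" using HL by simp
lemma L0_sc: "L0 r (sc k v) = sc k (L0 r v)" using HL by simp
lemma L0_one: "L0 r one = (if r = 0 then one else 0)" using HL by simp

lemma Lm_rho: "Lm r (rho a n v) = (\<Sum>i\<le>r. sc ((-1) ^ i * ibinom n i) (rho a (n - int i) (Lm (r - i) v)))"
  using HA unfolding H_action_induced_def by blast
lemma L0_rho: "L0 r (rho a n v) = (\<Sum>i\<le>r. sc (ibinom (2 * n) i) (rho a n (L0 (r - i) v)))"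
  using HA unfolding H_action_induced_def by blast
lemma L1_rho: "L1 r (rho a n v) = (\<Sum>i\<le>r. sc (ibinom (- n) i) (rho a (n + int i) (L1 (r - i) v)))"
  using HA unfolding H_action_induced_def by blast

lemma L1_0: "L1 r 0 = 0" by (rule additive_zero) (rule L1_add)
lemma Lm_0: "Lm r 0 = 0" by (rule additive_zero) (rule Lm_add)
lemma L0_0: "L0 r 0 = 0" by (rule additive_zero) (rule L0_add)
lemma L1_sum: "L1 r (sum g A) = (\<Sum>i\<in>A. L1 r (g i))" by (rule additive_sum) (rule L1_add)
lemma Lm_sum: "Lm r (sum g A) = (\<Sum>i\<in>A. Lm r (g i))" by (rule additive_sum) (rule Lm_add)
lemma L0_sum: "L0 r (sum g A) = (\<Sum>i\<in>A. L0 r (g i))" by (rule additive_sum) (rule L0_add)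
lemma L1_diff: "L1 r (x - y) = L1 r x - L1 r y" by (rule additive_diff) (rule L1_add)

abbreviation hom where "hom \<equiv> homog sc rho one"

lemma hom_cong: "hom d x \<Longrightarrow> d = e \<Longrightarrow> hom e x" by simp

lemma hom_sum: "(\<And>i. i \<in> A \<Longrightarrow> hom d (g i)) \<Longrightarrow> hom d (sum g A)"
proof (induction A rule: infinite_finite_induct)
  case (infinite A) then show ?case by (simp add: homog_zero)
next
  case empty then show ?case by (simp add: homog_zero)
next
  case (insert x F) then show ?case by (simp add: homog_add)
qed

lemma hom_neg: "hom d x \<Longrightarrow> hom d (- x)"
  using homog_scale[of sc rho one d x "-1"] by simp

lemma hom_diff: "hom d x \<Longrightarrow> hom d y \<Longrightarrow> hom d (x - y)"
  using homog_add[of sc rho one d x "- y"] hom_neg by simp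

lemma hom_fsum: "(\<And>i. hom d (g i)) \<Longrightarrow> hom d (fsum g)"
  unfolding fsum_def by (rule hom_sum) auto

lemma rho_deg: "hom e x \<Longrightarrow> hom (e - n) (rho a n x)"
proof (induction arbitrary: a n rule: homog.induct)
  case homog_one
  show ?case
  proof (cases "n \<ge> 0")
    case True then show ?thesis by (simp add: rho_one homog_zero)
  next
    case False
    then have "hom (0 + (-n)) (rho a (- (-n)) one)" by (intro homog.homog_act homog.homog_one) auto
    then show ?thesis by simp
  qed
next
  case (homog_zero d) then show ?case by (simp add: rho_0 homog.homog_zero)
next
  case (homog_add d x y) then show ?case by (simp add: rho_add homog.homog_add)
next
  case (homog_scale d x k) then show ?case by (simp add: rho_sc homog.homog_scale)
next
  case (homog_act d x s b)
  have 1: "hom (d + s - n) (rho b (-s) (rho a n x))"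
    using homog.homog_act[OF homog_act.IH homog_act.hyps(2)] by (simp add: algebra_simps)
  have 2: "hom (d + s - n) (rho (br a b) (n + - s) x)"
    using homog_act.IH[where a="br a b" and n="n - s"] by (simp add: algebra_simps)
  have 3: "hom (d + s - n) (sc (of_int n * (if n + - s = 0 then fm a b else 0) * ell) x)"
  proof (cases "n + - s = 0")
    case True then show ?thesis using homog_act.hyps(1) by (simp add: homog.homog_scale)
  next
    case False then show ?thesis by (simp add: homog.homog_zero)
  qed
  have eq: "rho a n (rho b (- s) x) = rho b (-s) (rho a n x) + (rho (br a b) (n + - s) x +
     sc (of_int n * (if n + - s = 0 then fm a b else 0) * ell) x)" by (rule rho_comm)
  show ?case unfolding eq by (intro homog.homog_add 1 2 3)
qed

lemma ibinom_0: "ibinom 0 i = (if i = 0 then 1 else 0)"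
  by (simp add: ibinom_ib B_zero_left)

lemma Bor_l0_single: "fsum (\<lambda>i. sc (ibinom 0 i) (F i)) = F 0"
  by (subst fsum_single) (auto simp: ibinom_0)

lemma Y_deg: "hom m u \<Longrightarrow> hom n v \<Longrightarrow> hom (m + n - r - 1) (Y u r v)"
proof (induction arbitrary: v n r rule: homog.induct)
  case homog_one
  then show ?case by (auto simp: Y_one homog.homog_zero)
next
  case (homog_zero d) then show ?case by (simp add: Y_01 homog.homog_zero)
next
  case (homog_add d x y) then show ?case by (simp add: Y_add1 homog.homog_add)
next
  case (homog_scale d x k) then show ?case by (simp add: Y_sc1 homog.homog_scale)
next
  case (homog_act d x s a)
  have B: "fsum (\<lambda>i. sc (ibinom 0 i) (Y (Y (cc a) (-s + int i) x) (0 + r - int i) v)) =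
        fsum (\<lambda>i. sc ((-1) ^ i * ibinom (-s) i)
                   (Y (cc a) (-s + 0 - int i) (Y x (r + int i) v)
                    - sc (if even (-s) then 1 else -1) (Y x (-s + r - int i) (Y (cc a) (0 + int i) v))))"
    by (rule Bor)
  have L: "fsum (\<lambda>i. sc (ibinom 0 i) (Y (Y (cc a) (-s + int i) x) (0 + r - int i) v)) = Y (rho a (-s) x) r v"
    by (simp add: Bor_l0_single Ycc)
  have "hom (d + s + n - r - 1) (fsum (\<lambda>i. sc ((-1) ^ i * ibinom (-s) i)
                   (Y (cc a) (-s + 0 - int i) (Y x (r + int i) v)
                    - sc (if even (-s) then 1 else -1) (Y x (-s + r - int i) (Y (cc a) (0 + int i) v)))))"
  proof (rule hom_fsum, rule homog.homog_scale, rule hom_diff)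
    fix i
    have "hom (d + n - (r + int i) - 1) (Y x (r + int i) v)" by (rule homog_act.IH[OF homog_act.prems])
    then have "hom (d + n - (r + int i) - 1 - (-s + 0 - int i)) (rho a (-s + 0 - int i) (Y x (r + int i) v))"
      by (rule rho_deg)
    then show "hom (d + s + n - r - 1) (Y (cc a) (-s + 0 - int i) (Y x (r + int i) v))"
      by (simp add: Ycc algebra_simps)
    have "hom (n - (0 + int i)) (rho a (0 + int i) v)" by (rule rho_deg[OF homog_act.prems])
    then have "hom (d + (n - (0 + int i)) - (-s + r - int i) - 1) (Y x (-s + r - int i) (rho a (0 + int i) v))"
      by (rule homog_act.IH)
    then show "hom (d + s + n - r - 1) (sc (if even (-s) then 1 else -1) (Y x (-s + r - int i) (Y (cc a) (0 + int i) v)))"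
      by (intro homog.homog_scale) (simp add: Ycc algebra_simps)
  qed
  then show ?case using B L by simp
qed

lemma L1_deg: "hom d v \<Longrightarrow> hom (d - int r) (L1 r v)"
proof (induction arbitrary: r rule: homog.induct)
  case homog_one then show ?case by (auto simp: L1_one homog.homog_zero homog.homog_one)
next
  case (homog_zero d) then show ?case by (simp add: L1_0 homog.homog_zero)
next
  case (homog_add d x y) then show ?case by (simp add: L1_add homog.homog_add)
next
  case (homog_scale d x k) then show ?case by (simp add: L1_sc homog.homog_scale)
next
  case (homog_act d x s a)
  show ?case unfolding L1_rho
  proof (rule hom_sum, rule homog.homog_scale)
    fix i assume "i \<in> {..r}"
    have "hom (d - int (r - i) - (- s + int i)) (rho a (- s + int i) (L1 (r - i) x))"
      by (rule rho_deg[OF homog_act.IH])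
    moreover have "d - int (r - i) - (- s + int i) = d + s - int r" using \<open>i \<in> {..r}\<close> by auto
    ultimately show "hom (d + s - int r) (rho a (- s + int i) (L1 (r - i) x))" by (rule hom_cong)
  qed
qed

lemma hom_neg_zero: "hom d v \<Longrightarrow> d < 0 \<Longrightarrow> v = 0"
proof (induction rule: homog.induct)
  case (homog_act d x s a)
  then show ?case by (simp add: rho_0)
qed auto

lemma rho_deg_zero: "hom d v \<Longrightarrow> d < n \<Longrightarrow> rho a n v = 0"
  using rho_deg[of d v n a] hom_neg_zero by auto

lemma ibinom_vand: "(\<Sum>k\<le>n. ibinom a k * ibinom b (n - k)) = (ibinom (a + b) n :: 'k)"
  unfolding ibinom_ib B_vand[symmetric] by simp

lemma L0_eig: "hom d v \<Longrightarrow> L0 r v = sc (ibinom (- 2 * d) r) v"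
proof (induction arbitrary: r rule: homog.induct)
  case homog_one then show ?case by (auto simp: L0_one ibinom_0)
next
  case (homog_zero d) then show ?case by (simp add: L0_0)
next
  case (homog_add d x y) then show ?case by (simp add: L0_add scale_right_distrib)
next
  case (homog_scale d x k) then show ?case by (simp add: L0_sc mult.commute)
next
  case (homog_act d x s a)
  have "L0 r (rho a (-s) x) = (\<Sum>i\<le>r. sc (ibinom (2 * -s) i * ibinom (- 2 * d) (r - i)) (rho a (-s) x))"
    unfolding L0_rho homog_act.IH by (simp add: rho_sc)
  also have "\<dots> = sc (\<Sum>i\<le>r. ibinom (2 * -s) i * ibinom (- 2 * d) (r - i)) (rho a (-s) x)"
    by (simp add: scale_sum_left)
  also have "(\<Sum>i\<le>r. ibinom (2 * -s) i * ibinom (- 2 * d) (r - i)) = (ibinom (- 2 * (d + s)) r :: 'k)"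
    using ibinom_vand[where n=r and a="2 * -s" and b="- 2 * d"] 
    by (simp add: algebra_simps)
  finally show ?case .
qed

lemma decomp: "\<exists>S c. finite S \<and> (\<forall>n\<in>S. hom n (c n)) \<and> v = (\<Sum>n\<in>S. c n)"
  using gen[of v]
proof (induction rule: generated_by_vac.induct)
  case gen_one
  show ?case by (rule exI[of _ "{0}"], rule exI[of _ "\<lambda>_. one"]) (simp add: homog.homog_one)
next
  case (gen_add x y)
  then obtain S1 c1 S2 c2 where 1: "finite S1" "\<forall>n\<in>S1. hom n (c1 n)" "x = (\<Sum>n\<in>S1. c1 n)"
    and 2: "finite S2" "\<forall>n\<in>S2. hom n (c2 n)" "y = (\<Sum>n\<in>S2. c2 n)" by blast
  define c where "c n = (if n \<in> S1 then c1 n else 0) + (if n \<in> S2 then c2 n else 0)" for n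
  have "(\<Sum>n\<in>S1 \<union> S2. (if n \<in> S1 then c1 n else 0)) = (\<Sum>n\<in>S1. c1 n)"
    using 1 2 by (intro sum.mono_neutral_cong_right) auto
  moreover have "(\<Sum>n\<in>S1 \<union> S2. (if n \<in> S2 then c2 n else 0)) = (\<Sum>n\<in>S2. c2 n)"
    using 1 2 by (intro sum.mono_neutral_cong_right) auto
  ultimately have "x + y = (\<Sum>n\<in>S1 \<union> S2. c n)" unfolding c_def sum.distrib 1 2 by simp
  moreover have "\<forall>n\<in>S1 \<union> S2. hom n (c n)"
    using 1 2 unfolding c_def by (auto intro!: homog.homog_add homog.homog_zero)
  ultimately show ?case using 1 2 by blast
next
  case (gen_scale x k)
  then obtain S c where 1: "finite S" "\<forall>n\<in>S. hom n (c n)" "x = (\<Sum>n\<in>S. c n)" by blast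
  show ?case
    by (rule exI[of _ S], rule exI[of _ "\<lambda>n. sc k (c n)"]) (use 1 in \<open>simp add: homog.homog_scale scale_sum_right\<close>)
next
  case (gen_act x a p)
  then obtain S c where 1: "finite S" "\<forall>n\<in>S. hom n (c n)" "x = (\<Sum>n\<in>S. c n)" by blast
  have "rho a p x = (\<Sum>m\<in>(\<lambda>n. n - p) ` S. rho a p (c (m + p)))"
    unfolding 1 rho_sum by (subst sum.reindex) (auto simp: inj_on_def)
  moreover have "\<forall>m\<in>(\<lambda>n. n - p) ` S. hom m (rho a p (c (m + p)))"
  proof
    fix m assume "m \<in> (\<lambda>n. n - p) ` S"
    then obtain n where n: "n \<in> S" "m = n - p" by blast
    then have "hom (n - p) (rho a p (c n))" using 1 rho_deg by blast
    moreover have "m + p = n" using n by simp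
    ultimately show "hom m (rho a p (c (m + p)))" using n by simp
  qed
  ultimately show ?case using 1(1)
    by (intro exI[of _ "(\<lambda>n. n - p) ` S"] exI[of _ "\<lambda>m. rho a p (c (m + p))"] conjI finite_imageI) assumption+
qed

lemma sc_cancel: "k \<noteq> 0 \<Longrightarrow> sc k v = 0 \<Longrightarrow> v = 0"
proof -
  assume k: "k \<noteq> 0" and z: "sc k v = 0"
  have "v = sc (inverse k) (sc k v)" using k by simp
  then show "v = 0" using z by simp
qed

lemma direct: "finite S \<Longrightarrow> (\<forall>n\<in>S. hom n (c n)) \<Longrightarrow> sum c S = 0 \<Longrightarrow> \<forall>n\<in>S. c n = 0"
proof (induction S arbitrary: c rule: finite_induct)
  case empty then show ?case by simp
next
  case (insert x F)
  define lam where "lam n r = (ibinom (- 2 * n) r :: 'k)" for n r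
  have cx: "c x = - sum c F" using insert by (simp add: eq_neg_iff_add_eq_0)
  have Z: "\<forall>n\<in>F. sc (lam n r - lam x r) (c n) = 0" for r
  proof (rule insert.IH)
    show "\<forall>n\<in>F. hom n (sc (lam n r - lam x r) (c n))" using insert by (simp add: homog.homog_scale)
    have "L0 r (sum c (insert x F)) = 0" using insert L0_0 by simp
    moreover have "L0 r (c x) = sc (lam x r) (c x)" using insert.prems(1) L0_eig lam_def by auto
    moreover have "(\<Sum>n\<in>F. L0 r (c n)) = (\<Sum>n\<in>F. sc (lam n r) (c n))"
      using insert.prems(1) by (intro sum.cong) (auto simp: L0_eig lam_def)
    ultimately have "sc (lam x r) (c x) + (\<Sum>n\<in>F. sc (lam n r) (c n)) = 0"
      using insert.hyps by (simp add: L0_sum L0_add)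
    then have h: "sc (lam x r) (c x) + (\<Sum>n\<in>F. sc (lam n r) (c n)) = 0" .
    have "(\<Sum>n\<in>F. sc (lam n r - lam x r) (c n)) = (\<Sum>n\<in>F. sc (lam n r) (c n)) - sc (lam x r) (sum c F)"
      by (simp add: scale_left_diff_distrib sum_subtractf scale_sum_right)
    also have "sc (lam x r) (sum c F) = - sc (lam x r) (c x)" using cx by simp
    finally show "(\<Sum>n\<in>F. sc (lam n r - lam x r) (c n)) = 0" using h by (simp add: algebra_simps)
  qed
  have F0: "\<forall>n\<in>F. c n = 0"
  proof
    fix n assume n: "n \<in> F"
    then have "n \<noteq> x" using insert by auto
    then have "\<not> (\<forall>r. lam n r = lam x r)" unfolding lam_def using sep[of "- 2 * n" "- 2 * x"] by auto
    then obtain r where "lam n r \<noteq> lam x r" by blast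
    then show "c n = 0" using Z[of r] n sc_cancel[of "lam n r - lam x r" "c n"] by auto
  qed
  then have "c x = 0" using cx by simp
  with F0 show ?case by simp
qed

lemma Lm_Y: "Lm r v = Y v (- int r - 1) one"
  using gen[of v]
proof (induction arbitrary: r rule: generated_by_vac.induct)
  case gen_one then show ?case by (simp add: Lm_one Y_one)
next
  case (gen_add x y) then show ?case by (simp add: Lm_add Y_add1)
next
  case (gen_scale x k) then show ?case by (simp add: Lm_sc Y_sc1)
next
  case (gen_act x a p)
  have B: "fsum (\<lambda>i. sc (ibinom 0 i) (Y (Y (cc a) (p + int i) x) (0 + (- int r - 1) - int i) one)) =
        fsum (\<lambda>i. sc ((-1) ^ i * ibinom p i)
                   (Y (cc a) (p + 0 - int i) (Y x ((- int r - 1) + int i) one)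
                    - sc (if even p then 1 else -1) (Y x (p + (- int r - 1) - int i) (Y (cc a) (0 + int i) one))))"
    by (rule Bor)
  have L: "fsum (\<lambda>i. sc (ibinom 0 i) (Y (Y (cc a) (p + int i) x) (0 + (- int r - 1) - int i) one)) = Y (rho a p x) (- int r - 1) one"
    by (simp add: Bor_l0_single Ycc)
  have R: "fsum (\<lambda>i. sc ((-1) ^ i * ibinom p i)
                   (Y (cc a) (p + 0 - int i) (Y x ((- int r - 1) + int i) one)
                    - sc (if even p then 1 else -1) (Y x (p + (- int r - 1) - int i) (Y (cc a) (0 + int i) one))))
       = (\<Sum>i\<le>r. sc ((-1) ^ i * ibinom p i) (rho a (p - int i) (Y x ((- int r - 1) + int i) one)))"
  proof (subst fsum_eq[of "{..r}"])
    fix i :: nat assume "i \<notin> {..r}"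
    then have "Y x ((- int r - 1) + int i) one = 0" by (intro Y_cre) auto
    then show "sc ((-1) ^ i * ibinom p i)
                   (Y (cc a) (p + 0 - int i) (Y x ((- int r - 1) + int i) one)
                    - sc (if even p then 1 else -1) (Y x (p + (- int r - 1) - int i) (Y (cc a) (0 + int i) one))) = 0"
      by (simp add: Ycc rho_one rho_0 Y_02)
  qed (simp_all add: Ycc rho_one Y_02)
  have "Lm r (rho a p x) = (\<Sum>i\<le>r. sc ((-1) ^ i * ibinom p i) (rho a (p - int i) (Y x ((- int r - 1) + int i) one)))"
    unfolding Lm_rho
  proof (rule sum.cong[OF refl])
    fix i assume "i \<in> {..r}"
    then have "- int (r - i) - 1 = (- int r - 1) + int i" by auto
    then show "sc ((-1) ^ i * ibinom p i) (rho a (p - int i) (Lm (r - i) x)) = sc ((-1) ^ i * ibinom p i) (rho a (p - int i) (Y x ((- int r - 1) + int i) one))"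
    proof -
      have "Lm (r - i) x = Y x (- int (r - i) - 1) one" by (rule gen_act.IH)
      also have "\<dots> = Y x ((- int r - 1) + int i) one" by (simp only: \<open>- int (r - i) - 1 = (- int r - 1) + int i\<close>)
      finally show ?thesis by simp
    qed
  qed
  then show ?case using B L R by simp
qed

lemma comm: "hom d u \<Longrightarrow> d \<le> int D \<Longrightarrow>
  Y u n (rho a p x) = rho a p (Y u n x) - (\<Sum>i\<le>D. sc (ibinom p i) (Y (rho a (int i) u) (p + n - int i) x))"
proof -
  assume u: "hom d u" and D: "d \<le> int D"
  have B: "fsum (\<lambda>i. sc (ibinom p i) (Y (Y (cc a) (0 + int i) u) (p + n - int i) x)) =
        fsum (\<lambda>i. sc ((-1) ^ i * ibinom 0 i)
                   (Y (cc a) (0 + p - int i) (Y u (n + int i) x)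
                    - sc (if even (0::int) then 1 else -1) (Y u (0 + n - int i) (Y (cc a) (p + int i) x))))"
    by (rule Bor)
  have L: "fsum (\<lambda>i. sc (ibinom p i) (Y (Y (cc a) (0 + int i) u) (p + n - int i) x)) =
     (\<Sum>i\<le>D. sc (ibinom p i) (Y (rho a (int i) u) (p + n - int i) x))"
  proof (subst fsum_eq[of "{..D}"])
    fix i assume "i \<notin> {..D}"
    then have "rho a (int i) u = 0" using D by (intro rho_deg_zero[OF u]) auto
    then show "sc (ibinom p i) (Y (Y (cc a) (0 + int i) u) (p + n - int i) x) = 0" by (simp add: Ycc Y_01)
  qed (simp_all add: Ycc)
  have R: "fsum (\<lambda>i. sc ((-1) ^ i * ibinom 0 i)
                   (Y (cc a) (0 + p - int i) (Y u (n + int i) x)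
                    - sc (if even (0::int) then 1 else -1) (Y u (0 + n - int i) (Y (cc a) (p + int i) x))))
      = rho a p (Y u n x) - Y u n (rho a p x)"
    by (subst fsum_single) (auto simp: ibinom_0 Ycc)
  from B L R show ?thesis by (simp add: algebra_simps)
qed

lemma G1: "L1 r (L1 s w) = sc (of_nat ((r + s) choose r)) (L1 (r + s) w)"
  using gen[of w]
proof (induction arbitrary: r s rule: generated_by_vac.induct)
  case gen_one then show ?case by (auto simp: L1_one L1_0)
next
  case (gen_add x y) then show ?case by (simp add: L1_add scale_right_distrib)
next
  case (gen_scale x k) then show ?case by (simp add: L1_sc mult.commute)
next
  case (gen_act x a p)
  define F where "F i j = sc (ibinom (-p) i * ibinom (- (p + int i)) j * of_nat ((r - j + (s - i)) choose (r - j)))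
     (rho a (p + int (i + j)) (L1 (r - j + (s - i)) x))" for i j
  have "L1 r (L1 s (rho a p x)) = (\<Sum>i\<le>s. \<Sum>j\<le>r. F i j)"
    unfolding L1_rho L1_sum L1_sc
  proof (rule sum.cong[OF refl])
    fix i assume "i \<in> {..s}"
    show "sc (ibinom (- p) i) (\<Sum>j\<le>r. sc (ibinom (- (p + int i)) j) (rho a (p + int i + int j) (L1 (r - j) (L1 (s - i) x)))) =
         (\<Sum>j\<le>r. F i j)"
      unfolding scale_sum_right F_def gen_act.IH by (simp add: rho_sc mult_ac add.assoc)
  qed
  also have "\<dots> = (\<Sum>t\<le>r+s. \<Sum>i\<in>{i. i\<le>s \<and> i\<le>t \<and> t-i\<le>r}. F i (t-i))" by (rule box_diag)
  also have "\<dots> = (\<Sum>t\<le>r+s. sc (of_nat ((r + s) choose r) * ibinom (-p) t) (rho a (p + int t) (L1 (r + s - t) x)))"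
  proof (rule sum.cong[OF refl])
    fix t assume t: "t \<in> {..r+s}"
    have "(\<Sum>i\<in>{i. i\<le>s \<and> i\<le>t \<and> t-i\<le>r}. F i (t-i)) =
       (\<Sum>i\<in>{i. i\<le>s \<and> i\<le>t \<and> t-i\<le>r}. sc (of_int (ib (-p) i * ib (-p - int i) (t - i) * int ((r - (t - i) + (s - i)) choose (r - (t - i)))))
          (rho a (p + int t) (L1 (r + s - t) x)))"
      unfolding F_def by (intro sum.cong refl) (auto simp: ibinom_ib)
    also have "\<dots> = sc (of_int (\<Sum>i\<in>{i. i\<le>s \<and> i\<le>t \<and> t-i\<le>r}. ib (-p) i * ib (-p - int i) (t - i) * int ((r - (t - i) + (s - i)) choose (r - (t - i)))))
          (rho a (p + int t) (L1 (r + s - t) x))"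
      by (simp add: scale_sum_left)
    also have "\<dots> = sc (of_nat ((r + s) choose r) * ibinom (-p) t) (rho a (p + int t) (L1 (r + s - t) x))"
      using G1_coef[of t r s "-p"] t by (simp add: ibinom_ib mult.commute)
    finally show "(\<Sum>i\<in>{i. i\<le>s \<and> i\<le>t \<and> t-i\<le>r}. F i (t-i)) = sc (of_nat ((r + s) choose r) * ibinom (-p) t) (rho a (p + int t) (L1 (r + s - t) x))" .
  qed
  also have "\<dots> = sc (of_nat ((r + s) choose r)) (L1 (r + s) (rho a p x))"
    unfolding L1_rho scale_sum_right by (simp add: rho_sc)
  finally show ?case .
qed

end


context HVA begin

lemma Bl: "hom d v \<Longrightarrow> L1 a (Lm r v) =
  (\<Sum>j\<le>min a r. sc ((-1)^j * ibinom (int a - 2*d - int r) j) (Lm (r-j) (L1 (a-j) v)))"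
proof (induction arbitrary: a r rule: homog.induct)
  case homog_one
  show ?case
  proof (cases "a = 0 \<and> r = 0")
    case True then show ?thesis by (simp add: L1_one Lm_one ibinom_0)
  next
    case False
    have "L1 a (Lm r one) = 0" using False by (auto simp: L1_one Lm_one L1_0)
    moreover have "(\<Sum>j\<le>min a r. sc ((-1)^j * ibinom (int a - 2*0 - int r) j) (Lm (r-j) (L1 (a-j) one))) = 0"
    proof (rule sum.neutral, rule ballI)
      fix j assume j: "j \<in> {..min a r}"
      show "sc ((-1)^j * ibinom (int a - 2*0 - int r) j) (Lm (r-j) (L1 (a-j) one)) = 0"
      proof (cases "j = a")
        case True
        show ?thesis
        proof (cases "r = a")
          case True
          then show ?thesis using \<open>j = a\<close> False by (simp add: ibinom_0)
        next
          case False
          then have "r - j \<noteq> 0" using j \<open>j = a\<close> by auto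
          then show ?thesis using \<open>j = a\<close> by (simp add: L1_one Lm_one)
        qed
      next
        case False
        then have "a - j \<noteq> 0" using j by auto
        then show ?thesis by (simp add: L1_one Lm_0)
      qed
    qed
    ultimately show ?thesis by simp
  qed
next
  case (homog_zero d) then show ?case by (simp add: L1_0 Lm_0)
next
  case (homog_add d x y) then show ?case by (simp add: L1_add Lm_add scale_right_distrib sum.distrib)
next
  case (homog_scale d x k) then show ?case by (simp add: L1_sc Lm_sc scale_sum_right mult.commute)
next
  case (homog_act e y s c)
  define p where "p = - s"
  define W where "W = int a - 2 * e - int r"
  define T where "T \<alpha> \<beta> = rho c (p - int \<alpha> + int \<beta>) (Lm (r - \<alpha>) (L1 (a - \<beta>) y))" for \<alpha> \<beta>
  define FL where "FL i q j = sc ((-1)^i * ibinom p i * ibinom (int i - p) q * ((-1)^j * ibinom (int (a-q) - 2*e - int (r-i)) j))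
      (rho c (p - int i + int q) (Lm (r-i-j) (L1 (a-q-j) y)))" for i q j
  define FR where "FR i q j = sc ((-1)^j * ibinom (int a - 2*(e+s) - int r) j * ibinom (-p) q * ((-1)^i * ibinom (p + int q) i))
      (rho c (p + int q - int i) (Lm (r-j-i) (L1 (a-j-q) y)))" for i q j
  have L: "L1 a (Lm r (rho c p y)) = (\<Sum>i\<le>r. \<Sum>q\<le>a. \<Sum>j\<le>min (a-q) (r-i). FL i q j)"
    unfolding Lm_rho L1_sum L1_sc
  proof (rule sum.cong[OF refl])
    fix i assume i: "i \<in> {..r}"
    show "sc ((-1)^i * ibinom p i) (L1 a (rho c (p - int i) (Lm (r - i) y))) = (\<Sum>q\<le>a. \<Sum>j\<le>min (a-q) (r-i). FL i q j)"
      unfolding L1_rho scale_sum_right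
    proof (rule sum.cong[OF refl])
      fix q assume q: "q \<in> {..a}"
      show "sc ((-1)^i * ibinom p i) (sc (ibinom (- (p - int i)) q) (rho c (p - int i + int q) (L1 (a - q) (Lm (r - i) y)))) =
          (\<Sum>j\<le>min (a-q) (r-i). FL i q j)"
        unfolding homog_act.IH rho_sum rho_sc scale_sum_right FL_def
        by (intro sum.cong refl) (simp add: diff_diff_add mult_ac)
    qed
  qed
  have R: "(\<Sum>j\<le>min a r. sc ((-1)^j * ibinom (int a - 2*(e+s) - int r) j) (Lm (r-j) (L1 (a-j) (rho c p y))))
     = (\<Sum>j\<le>min a r. \<Sum>q\<le>a-j. \<Sum>i\<le>r-j. FR i q j)"
  proof (rule sum.cong[OF refl])
    fix j assume j: "j \<in> {..min a r}"
    show "sc ((-1)^j * ibinom (int a - 2*(e+s) - int r) j) (Lm (r-j) (L1 (a-j) (rho c p y))) = (\<Sum>q\<le>a-j. \<Sum>i\<le>r-j. FR i q j)"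
      unfolding L1_rho Lm_sum Lm_sc scale_sum_right
    proof (rule sum.cong[OF refl])
      fix q assume q: "q \<in> {..a-j}"
      show "sc ((-1)^j * ibinom (int a - 2*(e+s) - int r) j) (sc (ibinom (- p) q) (Lm (r - j) (rho c (p + int q) (L1 (a - j - q) y)))) =
          (\<Sum>i\<le>r-j. FR i q j)"
        unfolding Lm_rho scale_sum_right FR_def
        by (intro sum.cong refl) (simp add: mult_ac diff_diff_add)
    qed
  qed
  have "L1 a (Lm r (rho c p y)) = (\<Sum>\<alpha>\<le>r. \<Sum>\<beta>\<le>a. \<Sum>j\<le>min \<alpha> \<beta>. FL (\<alpha>-j) (\<beta>-j) j)"
    unfolding L by (rule RB1)
  also have "\<dots> = (\<Sum>\<alpha>\<le>r. \<Sum>\<beta>\<le>a. \<Sum>j\<le>min \<alpha> \<beta>. FR (\<alpha>-j) (\<beta>-j) j)"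
  proof (rule sum.cong[OF refl], rule sum.cong[OF refl])
    fix \<alpha> \<beta> assume \<alpha>: "\<alpha> \<in> {..r}" and \<beta>: "\<beta> \<in> {..a}"
    have "(\<Sum>j\<le>min \<alpha> \<beta>. FL (\<alpha>-j) (\<beta>-j) j) = (\<Sum>j\<le>min \<alpha> \<beta>. sc ((-1)^\<alpha> * of_int (ib (W + int \<alpha> - int \<beta>) j * (ib p (\<alpha>-j) * ib (int (\<alpha>-j) - p) (\<beta>-j)))) (T \<alpha> \<beta>))"
    proof (rule sum.cong[OF refl])
      fix j assume j: "j \<in> {..min \<alpha> \<beta>}"
      then have jj: "j \<le> \<alpha>" "j \<le> \<beta>" "\<alpha> \<le> r" "\<beta> \<le> a" using \<alpha> \<beta> by auto
      have e1: "p - int (\<alpha>-j) + int (\<beta>-j) = p - int \<alpha> + int \<beta>" "r - (\<alpha>-j) - j = r - \<alpha>" "a - (\<beta>-j) - j = a - \<beta>"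
        using jj by auto
      have e2: "int (a - (\<beta>-j)) - 2*e - int (r - (\<alpha>-j)) = W + int \<alpha> - int \<beta>" using jj unfolding W_def by auto
      have e3: "(-1::'k)^(\<alpha>-j) * (-1)^j = (-1)^\<alpha>" using jj by (simp flip: power_add)
      show "FL (\<alpha>-j) (\<beta>-j) j = sc ((-1)^\<alpha> * of_int (ib (W + int \<alpha> - int \<beta>) j * (ib p (\<alpha>-j) * ib (int (\<alpha>-j) - p) (\<beta>-j)))) (T \<alpha> \<beta>)"
        unfolding FL_def T_def e1 e2 ibinom_ib e3[symmetric] by (simp add: mult_ac)
    qed
    also have "\<dots> = sc ((-1)^\<alpha> * of_int (\<Sum>j\<le>min \<alpha> \<beta>. ib (W + int \<alpha> - int \<beta>) j * (ib p (\<alpha>-j) * ib (int (\<alpha>-j) - p) (\<beta>-j)))) (T \<alpha> \<beta>)"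
      by (simp add: scale_sum_left sum_distrib_left)
    also have "\<dots> = sc ((-1)^\<alpha> * of_int (\<Sum>j\<le>min \<alpha> \<beta>. ib (W + 2*p) j * (ib (-p) (\<beta>-j) * ib (p + int (\<beta>-j)) (\<alpha>-j)))) (T \<alpha> \<beta>)"
      by (simp only: I2c)
    also have "\<dots> = (\<Sum>j\<le>min \<alpha> \<beta>. sc ((-1)^\<alpha> * of_int (ib (W + 2*p) j * (ib (-p) (\<beta>-j) * ib (p + int (\<beta>-j)) (\<alpha>-j)))) (T \<alpha> \<beta>))"
      by (simp add: scale_sum_left sum_distrib_left)
    also have "\<dots> = (\<Sum>j\<le>min \<alpha> \<beta>. FR (\<alpha>-j) (\<beta>-j) j)"
    proof (rule sum.cong[OF refl])
      fix j assume j: "j \<in> {..min \<alpha> \<beta>}"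
      then have jj: "j \<le> \<alpha>" "j \<le> \<beta>" "\<alpha> \<le> r" "\<beta> \<le> a" using \<alpha> \<beta> by auto
      have e1: "p + int (\<beta>-j) - int (\<alpha>-j) = p - int \<alpha> + int \<beta>" "r - j - (\<alpha>-j) = r - \<alpha>" "a - j - (\<beta>-j) = a - \<beta>"
        using jj by auto
      have e2: "int a - 2*(e+s) - int r = W + 2*p" unfolding W_def p_def by simp
      have e3: "(-1::'k)^j * (-1)^(\<alpha>-j) = (-1)^\<alpha>" using jj by (simp flip: power_add)
      show "sc ((-1)^\<alpha> * of_int (ib (W + 2*p) j * (ib (-p) (\<beta>-j) * ib (p + int (\<beta>-j)) (\<alpha>-j)))) (T \<alpha> \<beta>) = FR (\<alpha>-j) (\<beta>-j) j"
        unfolding FR_def T_def e1 e2 ibinom_ib e3[symmetric] by (simp add: mult_ac)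
    qed
    finally show "(\<Sum>j\<le>min \<alpha> \<beta>. FL (\<alpha>-j) (\<beta>-j) j) = (\<Sum>j\<le>min \<alpha> \<beta>. FR (\<alpha>-j) (\<beta>-j) j)" .
  qed
  also have "\<dots> = (\<Sum>j\<le>min a r. \<Sum>q\<le>a-j. \<Sum>i\<le>r-j. FR i q j)" by (rule RB2[symmetric])
  finally show ?case using R p_def by simp
qed

definition RR :: "int \<Rightarrow> 'v \<Rightarrow> int \<Rightarrow> nat \<Rightarrow> 'v \<Rightarrow> 'v" where
  "RR d v n a w = (\<Sum>k\<le>a. \<Sum>j\<le>a-k. sc (ibinom (2*d - int k - n - 2) j) (Y (L1 k v) (n + int j) (L1 (a-k-j) w)))"

lemma RR_one: "hom d v \<Longrightarrow> L1 a (Y v n one) = RR d v n a one"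
proof -
  assume v: "hom d v"
  have inner: "(\<Sum>j\<le>a-k. sc (ibinom (2*d - int k - n - 2) j) (Y (L1 k v) (n + int j) (L1 (a-k-j) one)))
      = sc (ibinom (2*d - int k - n - 2) (a-k)) (Y (L1 k v) (n + int (a-k)) one)" for k
    by (subst sum_last) (auto simp: L1_one Y_02)
  show ?thesis
  proof (cases "n \<ge> 0")
    case True
    have "RR d v n a one = 0" unfolding RR_def inner
      by (rule sum.neutral) (use True in \<open>auto simp: Y_cre\<close>)
    then show ?thesis using True by (simp add: Y_cre L1_0)
  next
    case False
    define r where "r = nat (- n - 1)"
    have n: "n = - int r - 1" using False r_def by simp
    have "L1 a (Y v n one) = L1 a (Lm r v)" by (simp add: Lm_Y n)
    also have "\<dots> = (\<Sum>j\<le>min a r. sc ((-1)^j * ibinom (int a - 2*d - int r) j) (Lm (r-j) (L1 (a-j) v)))"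
      by (rule Bl[OF v])
    also have "\<dots> = (\<Sum>j\<le>a. sc (ibinom (2*d - int (a-j) - n - 2) j) (Y (L1 (a-j) v) (n + int j) one))"
    proof (rule sum.mono_neutral_cong_left)
      show "\<forall>j\<in>{..a} - {..min a r}. sc (ibinom (2*d - int (a-j) - n - 2) j) (Y (L1 (a-j) v) (n + int j) one) = 0"
      proof
        fix j assume "j \<in> {..a} - {..min a r}"
        then have "n + int j \<ge> 0" using n by auto
        then show "sc (ibinom (2*d - int (a-j) - n - 2) j) (Y (L1 (a-j) v) (n + int j) one) = 0" by (simp add: Y_cre)
      qed
      fix j assume j: "j \<in> {..min a r}"
      then have e: "- int (r - j) - 1 = n + int j" using n by auto
      have "Lm (r-j) (L1 (a-j) v) = Y (L1 (a-j) v) (n + int j) one" by (simp only: Lm_Y e)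
      moreover have "(-1)^j * ibinom (int a - 2*d - int r) j = (ibinom (2*d - int (a-j) - n - 2) j :: 'k)"
      proof -
        have "int j - (int a - 2*d - int r) - 1 = 2*d - int (a-j) - n - 2" using j n by auto
        then show ?thesis by (simp only: chi_neg)
      qed
      ultimately show "sc ((-1)^j * ibinom (int a - 2*d - int r) j) (Lm (r-j) (L1 (a-j) v)) =
          sc (ibinom (2*d - int (a-j) - n - 2) j) (Y (L1 (a-j) v) (n + int j) one)" by simp
    qed auto
    also have "\<dots> = (\<Sum>k\<le>a. sc (ibinom (2*d - int k - n - 2) (a-k)) (Y (L1 k v) (n + int (a-k)) one))"
      by (subst sum_rev) (intro sum.cong refl, simp)
    also have "\<dots> = RR d v n a one" unfolding RR_def inner ..
    finally show ?thesis .
  qed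
qed

lemma RR_add: "RR d v n a (x + y) = RR d v n a x + RR d v n a y"
  unfolding RR_def by (simp add: L1_add Y_add2 scale_right_distrib sum.distrib)

lemma RR_sc: "RR d v n a (sc k x) = sc k (RR d v n a x)"
  unfolding RR_def by (simp add: L1_sc Y_sc2 scale_sum_right mult_ac)

lemma Rl: "generated_by_vac sc rho one w \<Longrightarrow> hom d v \<Longrightarrow> L1 a (Y v n w) = RR d v n a w"
proof (induction arbitrary: d v n a rule: generated_by_vac.induct)
  case gen_one then show ?case by (rule RR_one)
next
  case (gen_add x y) then show ?case by (simp add: Y_add2 L1_add RR_add)
next
  case (gen_scale x k) then show ?case by (simp add: Y_sc2 L1_sc RR_sc)
next
  case (gen_act x c p)
  note v = gen_act.prems
  define D where "D = nat d"
  define E where "E = D + a"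
  have dD: "d \<le> int D" unfolding D_def by simp
  define GA where "GA q k j = sc (ibinom (-p) q * ibinom (2*d - int k - n - 2) j)
     (rho c (p + int q) (Y (L1 k v) (n + int j) (L1 (a-q-k-j) x)))" for q k j
  define GL where "GL i k j q = sc (ibinom p i * ibinom (2*(d - int i) - int k - (p + n - int i) - 2) j * ibinom (- int i) q)
     (Y (rho c (int i + int q) (L1 (k-q) v)) (p + n - int i + int j) (L1 (a-k-j) x))" for i k j q
  define GR where "GR k j q i = sc (ibinom (2*d - int k - n - 2) j * ibinom (-p) q * ibinom (p + int q) i)
     (Y (rho c (int i) (L1 k v)) (p + int q + (n + int j) - int i) (L1 (a-k-j-q) x))" for k j q i
  have AL: "L1 a (rho c p (Y v n x)) = (\<Sum>q\<le>a. \<Sum>k\<le>a-q. \<Sum>j\<le>a-q-k. GA q k j)"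
    unfolding L1_rho
  proof (rule sum.cong[OF refl])
    fix q assume "q \<in> {..a}"
    show "sc (ibinom (- p) q) (rho c (p + int q) (L1 (a - q) (Y v n x))) = (\<Sum>k\<le>a-q. \<Sum>j\<le>a-q-k. GA q k j)"
      unfolding gen_act.IH[OF v] RR_def rho_sum scale_sum_right GA_def
      by (intro sum.cong refl) (simp add: rho_sc diff_diff_add mult_ac)
  qed
  have BL: "(\<Sum>i\<le>D. sc (ibinom p i) (L1 a (Y (rho c (int i) v) (p + n - int i) x))) =
       (\<Sum>i\<le>D. \<Sum>k\<le>a. \<Sum>j\<le>a-k. \<Sum>q\<le>k. GL i k j q)"
  proof (rule sum.cong[OF refl])
    fix i assume "i \<in> {..D}"
    have hv: "hom (d - int i) (rho c (int i) v)" using rho_deg[OF v] by simp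
    show "sc (ibinom p i) (L1 a (Y (rho c (int i) v) (p + n - int i) x)) = (\<Sum>k\<le>a. \<Sum>j\<le>a-k. \<Sum>q\<le>k. GL i k j q)"
      unfolding gen_act.IH[OF hv] RR_def scale_sum_right
    proof (intro sum.cong refl)
      fix k j
      show "sc (ibinom p i) (sc (ibinom (2 * (d - int i) - int k - (p + n - int i) - 2) j)
           (Y (L1 k (rho c (int i) v)) (p + n - int i + int j) (L1 (a - k - j) x))) = (\<Sum>q\<le>k. GL i k j q)"
        unfolding L1_rho Y_sum1 Y_sc1 scale_sum_right GL_def
        by (intro sum.cong refl) (simp add: mult_ac)
    qed
  qed
  have RHS0: "RR d v n a (rho c p x) = (\<Sum>k\<le>a. \<Sum>j\<le>a-k. (\<Sum>q\<le>a-k-j. sc (ibinom (2*d - int k - n - 2) j * ibinom (-p) q)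
       (rho c (p + int q) (Y (L1 k v) (n + int j) (L1 (a-k-j-q) x))))
     - (\<Sum>q\<le>a-k-j. \<Sum>i\<le>E. GR k j q i))"
    unfolding RR_def
  proof (rule sum.cong[OF refl], rule sum.cong[OF refl])
    fix k j assume k: "k \<in> {..a}" and j: "j \<in> {..a-k}"
    have hk: "hom (d - int k) (L1 k v)" by (rule L1_deg[OF v])
    have Ek: "d - int k \<le> int E" using dD unfolding E_def by simp
    show "sc (ibinom (2*d - int k - n - 2) j) (Y (L1 k v) (n + int j) (L1 (a-k-j) (rho c p x))) =
       (\<Sum>q\<le>a-k-j. sc (ibinom (2*d - int k - n - 2) j * ibinom (-p) q)
       (rho c (p + int q) (Y (L1 k v) (n + int j) (L1 (a-k-j-q) x)))) - (\<Sum>q\<le>a-k-j. \<Sum>i\<le>E. GR k j q i)"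
    proof -
      let ?C = "ibinom (2*d - int k - n - 2) j"
      have "sc ?C (Y (L1 k v) (n + int j) (L1 (a-k-j) (rho c p x))) =
        (\<Sum>q\<le>a-k-j. sc ?C (sc (ibinom (- p) q) (Y (L1 k v) (n + int j) (rho c (p + int q) (L1 (a - k - j - q) x)))))"
        unfolding L1_rho Y_sum2 Y_sc2 scale_sum_right ..
      also have "\<dots> = (\<Sum>q\<le>a-k-j. sc (?C * ibinom (-p) q) (rho c (p + int q) (Y (L1 k v) (n + int j) (L1 (a-k-j-q) x))) -
        (\<Sum>i\<le>E. GR k j q i))"
      proof (rule sum.cong[OF refl])
        fix q
        show "sc ?C (sc (ibinom (- p) q) (Y (L1 k v) (n + int j) (rho c (p + int q) (L1 (a - k - j - q) x)))) =
          sc (?C * ibinom (-p) q) (rho c (p + int q) (Y (L1 k v) (n + int j) (L1 (a-k-j-q) x))) - (\<Sum>i\<le>E. GR k j q i)"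
          unfolding comm[OF hk Ek] GR_def
          by (simp add: scale_right_diff_distrib scale_sum_right mult_ac)
      qed
      also have "\<dots> = (\<Sum>q\<le>a-k-j. sc (?C * ibinom (-p) q) (rho c (p + int q) (Y (L1 k v) (n + int j) (L1 (a-k-j-q) x)))) -
         (\<Sum>q\<le>a-k-j. \<Sum>i\<le>E. GR k j q i)"
        by (simp add: sum_subtractf)
      finally show ?thesis .
    qed
  qed
  have RHS: "RR d v n a (rho c p x) = (\<Sum>k\<le>a. \<Sum>j\<le>a-k. \<Sum>q\<le>a-k-j. sc (ibinom (2*d - int k - n - 2) j * ibinom (-p) q)
       (rho c (p + int q) (Y (L1 k v) (n + int j) (L1 (a-k-j-q) x))))
     - (\<Sum>k\<le>a. \<Sum>j\<le>a-k. \<Sum>q\<le>a-k-j. \<Sum>i\<le>E. GR k j q i)"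
    unfolding RHS0 by (simp only: sum_subtractf)
  have A: "(\<Sum>q\<le>a. \<Sum>k\<le>a-q. \<Sum>j\<le>a-q-k. GA q k j) = (\<Sum>k\<le>a. \<Sum>j\<le>a-k. \<Sum>q\<le>a-k-j. sc (ibinom (2*d - int k - n - 2) j * ibinom (-p) q)
       (rho c (p + int q) (Y (L1 k v) (n + int j) (L1 (a-k-j-q) x))))"
  proof -
    show ?thesis
    proof (subst RA, intro sum.cong refl)
      fix k j q
      have e: "a - q - k - j = a - k - j - q" by simp
      show "GA q k j = sc (ibinom (2*d - int k - n - 2) j * ibinom (-p) q)
       (rho c (p + int q) (Y (L1 k v) (n + int j) (L1 (a-k-j-q) x)))"
        unfolding GA_def e by (simp add: mult_ac)
    qed
  qed
  have B: "(\<Sum>i\<le>D. \<Sum>k\<le>a. \<Sum>j\<le>a-k. \<Sum>q\<le>k. GL i k j q) = (\<Sum>k\<le>a. \<Sum>j\<le>a-k. \<Sum>q\<le>a-k-j. \<Sum>i\<le>E. GR k j q i)"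
  proof -
    have "(\<Sum>i\<le>D. \<Sum>k\<le>a. \<Sum>j\<le>a-k. \<Sum>q\<le>k. GL i k j q) =
      (\<Sum>I\<le>D+a. \<Sum>K\<le>a. \<Sum>T\<le>a-K. \<Sum>q\<in>{q. q\<le>a-K-T \<and> q\<le>I \<and> I-q\<le>D}. GL (I-q) (K+q) (a-K-T-q) q)"
      by (rule RL4)
    also have "\<dots> = (\<Sum>I\<le>E. \<Sum>K\<le>a. \<Sum>T\<le>a-K. \<Sum>q\<le>a-K-T. GR K (a-K-T-q) q I)"
      unfolding E_def
    proof (rule sum.cong[OF refl], rule sum.cong[OF refl], rule sum.cong[OF refl])
      fix I K T assume I: "I \<in> {..D+a}" and K: "K \<in> {..a}" and T: "T \<in> {..a-K}"
      define J where "J = a - K - T"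
      define Z where "Z = 2*d - int K - n - 2"
      define TB where "TB = Y (rho c (int I) (L1 K v)) (p + n - int I + int J) (L1 T x)"
      have KJT: "K + J + T = a" using K T unfolding J_def by auto
      show "(\<Sum>q\<in>{q. q\<le>a-K-T \<and> q\<le>I \<and> I-q\<le>D}. GL (I-q) (K+q) (a-K-T-q) q) = (\<Sum>q\<le>a-K-T. GR K (a-K-T-q) q I)"
      proof (cases "I \<le> D")
        case True
        have S: "{q. q\<le>J \<and> q\<le>I \<and> I-q\<le>D} = {..min I J}" using True by auto
        have L: "(\<Sum>q\<in>{q. q\<le>a-K-T \<and> q\<le>I \<and> I-q\<le>D}. GL (I-q) (K+q) (a-K-T-q) q) =
          (\<Sum>q\<le>min I J. sc (of_int (ib p (I-q) * ib (Z - int I - p) (J-q) * ib (int q - int I) q)) TB)"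
          unfolding J_def[symmetric] S
        proof (rule sum.cong[OF refl])
          fix q assume q: "q \<in> {..min I J}"
          have e1: "int (I-q) + int q = int I" "K + q - q = K" "p + n - int (I-q) + int (J-q) = p + n - int I + int J"
            "a - (K+q) - (J-q) = T" using q KJT by auto
          have e2: "2*(d - int (I-q)) - int (K+q) - (p + n - int (I-q)) - 2 = Z - int I - p" "- int (I-q) = int q - int I"
            using q unfolding Z_def by auto
          show "GL (I-q) (K+q) (J-q) q = sc (of_int (ib p (I-q) * ib (Z - int I - p) (J-q) * ib (int q - int I) q)) TB"
            unfolding GL_def TB_def e1 e2 by (simp add: ibinom_ib)
        qed
        have R: "(\<Sum>q\<le>a-K-T. GR K (a-K-T-q) q I) =
          (\<Sum>q\<le>J. sc (of_int (ib Z (J-q) * ib (-p) q * ib (p + int q) I)) TB)"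
          unfolding J_def[symmetric]
        proof (rule sum.cong[OF refl])
          fix q assume q: "q \<in> {..J}"
          have e1: "p + int q + (n + int (J-q)) - int I = p + n - int I + int J" "a - K - (J-q) - q = T"
            using q KJT by auto
          have e2: "2*d - int K - n - 2 = Z" unfolding Z_def ..
          show "GR K (J-q) q I = sc (of_int (ib Z (J-q) * ib (-p) q * ib (p + int q) I)) TB"
            unfolding GR_def TB_def e1 e2 by (simp add: ibinom_ib)
        qed
        show ?thesis unfolding L R scale_sum_left[symmetric] of_int_sum[symmetric] I3c ..
      next
        case False
        have hk: "hom (d - int K) (L1 K v)" by (rule L1_deg[OF v])
        have z: "rho c (int I) (L1 K v) = 0" using False dD by (intro rho_deg_zero[OF hk]) auto
        have "(\<Sum>q\<in>{q. q\<le>a-K-T \<and> q\<le>I \<and> I-q\<le>D}. GL (I-q) (K+q) (a-K-T-q) q) = 0"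
        proof (rule sum.neutral, rule ballI)
          fix q assume "q \<in> {q. q\<le>a-K-T \<and> q\<le>I \<and> I-q\<le>D}"
          then have e: "int (I-q) + int q = int I" "K + q - q = K" by auto
          show "GL (I-q) (K+q) (a-K-T-q) q = 0" unfolding GL_def e z by (simp add: Y_01)
        qed
        moreover have "(\<Sum>q\<le>a-K-T. GR K (a-K-T-q) q I) = 0"
          by (rule sum.neutral) (simp add: GR_def z Y_01)
        ultimately show ?thesis by simp
      qed
    qed
    also have "\<dots> = (\<Sum>k\<le>a. \<Sum>j\<le>a-k. \<Sum>q\<le>a-k-j. \<Sum>i\<le>E. GR k j q i)"
      by (rule RR4[symmetric])
    finally show ?thesis .
  qed
  have "L1 a (Y v n (rho c p x)) = L1 a (rho c p (Y v n x)) - (\<Sum>i\<le>D. sc (ibinom p i) (L1 a (Y (rho c (int i) v) (p + n - int i) x)))"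
    unfolding comm[OF v dD] L1_diff L1_sum L1_sc ..
  then show ?case unfolding RHS AL BL A B .
qed

lemma L1_zero: "L1 0 w = w"
  using gen[of w]
proof (induction rule: generated_by_vac.induct)
  case gen_one then show ?case by (simp add: L1_one)
next
  case (gen_add x y) then show ?case by (simp add: L1_add)
next
  case (gen_scale x k) then show ?case by (simp add: L1_sc)
next
  case (gen_act x a p) then show ?case by (simp add: L1_rho ibinom_ib)
qed

lemma alt_k: "(\<Sum>q\<le>m. (-1)^q * (of_nat (m choose (m - q)) :: 'k)) = (if m = 0 then 1 else 0)"
proof -
  have "(\<Sum>q\<le>m. (-1)^q * (of_nat (m choose (m - q)) :: 'k)) = (\<Sum>q\<le>m. (-1)^q * of_nat (m choose q))"
    by (intro sum.cong refl) (simp add: binomial_symmetric[symmetric])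
  also have "\<dots> = (if m = 0 then 1 else 0)"
    using choose_alternating_sum[of m, where 'a='k] by (cases "m = 0") auto
  finally show ?thesis .
qed

lemma conjug: "hom d v \<Longrightarrow>
        (\<Sum>k\<le>a. sc ((-1) ^ k) (L1 (a - k) (Y v (- b - 1) (L1 k w)))) =
        (\<Sum>k\<le>a. sc ((-1) ^ (a - k) * ibinom (int k - 2 * d + (int a - int k - b - 1) + 1) (a - k))
                    (Y (L1 k v) (int a - int k - b - 1) w))"
proof -
  assume v: "hom d v"
  define n where "n = - b - 1"
  define F where "F q k j = sc ((-1)^q * of_nat ((a - k - j) choose (a - k - j - q)) * ibinom (2*d - int k - n - 2) j)
     (Y (L1 k v) (n + int j) (L1 (a - k - j) w))" for q k j
  have "(\<Sum>k\<le>a. sc ((-1) ^ k) (L1 (a - k) (Y v (- b - 1) (L1 k w)))) = (\<Sum>q\<le>a. \<Sum>k\<le>a-q. \<Sum>j\<le>a-q-k. F q k j)"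
  proof (rule sum.cong[OF refl])
    fix q assume q: "q \<in> {..a}"
    show "sc ((-1) ^ q) (L1 (a - q) (Y v (- b - 1) (L1 q w))) = (\<Sum>k\<le>a-q. \<Sum>j\<le>a-q-k. F q k j)"
      unfolding Rl[OF gen v] RR_def scale_sum_right n_def[symmetric]
    proof (rule sum.cong[OF refl], rule sum.cong[OF refl])
      fix k j assume k: "k \<in> {..a-q}" and j: "j \<in> {..a-q-k}"
      have e: "a - q - k - j + q = a - k - j" "a - k - j - (a - q - k - j) = q" using q k j by auto
      have e2: "(a - k - j) choose (a - q - k - j) = (a - k - j) choose (a - k - j - q)"
        by (simp add: diff_diff_left add_ac)
      show "sc ((-1) ^ q) (sc (ibinom (2*d - int k - n - 2) j) (Y (L1 k v) (n + int j) (L1 (a - q - k - j) (L1 q w)))) = F q k j"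
        unfolding G1 e F_def e2[symmetric] by (simp add: Y_sc2 mult_ac)
    qed
  qed
  also have "\<dots> = (\<Sum>k\<le>a. \<Sum>j\<le>a-k. \<Sum>q\<le>a-k-j. F q k j)" by (rule RA)
  also have "\<dots> = (\<Sum>k\<le>a. \<Sum>j\<le>a-k. sc (if a - k - j = 0 then ibinom (2*d - int k - n - 2) j else 0) (Y (L1 k v) (n + int j) (L1 (a - k - j) w)))"
  proof (rule sum.cong[OF refl], rule sum.cong[OF refl])
    fix k j
    have "(\<Sum>q\<le>a-k-j. F q k j) = sc ((\<Sum>q\<le>a-k-j. (-1)^q * of_nat ((a - k - j) choose (a - k - j - q))) * ibinom (2*d - int k - n - 2) j)
       (Y (L1 k v) (n + int j) (L1 (a - k - j) w))"
      unfolding F_def scale_sum_left[symmetric] sum_distrib_right ..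
    then show "(\<Sum>q\<le>a-k-j. F q k j) = sc (if a - k - j = 0 then ibinom (2*d - int k - n - 2) j else 0) (Y (L1 k v) (n + int j) (L1 (a - k - j) w))"
      unfolding alt_k by simp
  qed
  also have "\<dots> = (\<Sum>k\<le>a. sc (ibinom (2*d - int k - n - 2) (a - k)) (Y (L1 k v) (n + int (a - k)) w))"
  proof (rule sum.cong[OF refl])
    fix k assume k: "k \<in> {..a}"
    show "(\<Sum>j\<le>a-k. sc (if a - k - j = 0 then ibinom (2*d - int k - n - 2) j else 0) (Y (L1 k v) (n + int j) (L1 (a - k - j) w))) =
        sc (ibinom (2*d - int k - n - 2) (a - k)) (Y (L1 k v) (n + int (a - k)) w)"
      by (subst sum_last) (auto simp: L1_zero)
  qed
  also have "\<dots> = (\<Sum>k\<le>a. sc ((-1) ^ (a - k) * ibinom (int k - 2 * d + (int a - int k - b - 1) + 1) (a - k))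
                    (Y (L1 k v) (int a - int k - b - 1) w))"
  proof (rule sum.cong[OF refl])
    fix k assume k: "k \<in> {..a}"
    have e1: "n + int (a - k) = int a - int k - b - 1" using k unfolding n_def by auto
    have e2: "int (a - k) - (int k - 2 * d + (int a - int k - b - 1) + 1) - 1 = 2*d - int k - n - 2"
      using k unfolding n_def by auto
    show "sc (ibinom (2*d - int k - n - 2) (a - k)) (Y (L1 k v) (n + int (a - k)) w) =
      sc ((-1) ^ (a - k) * ibinom (int k - 2 * d + (int a - int k - b - 1) + 1) (a - k)) (Y (L1 k v) (int a - int k - b - 1) w)"
      unfolding chi_neg e1 e2 ..
  qed
  finally show ?thesis .
qed

lemma main: "H_module_VA sc Y one (\<lambda>d. {v. homog sc rho one d v}) Lm L0 L1"
proof -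
  let ?V = "\<lambda>d. {v. homog sc rho one d v}"
  have gd: "graded_direct sc ?V"
    unfolding graded_direct_def
  proof (intro conjI)
    show "\<forall>n. 0 \<in> ?V n \<and> (\<forall>x\<in>?V n. \<forall>y\<in>?V n. x + y \<in> ?V n) \<and> (\<forall>k. \<forall>x\<in>?V n. sc k x \<in> ?V n)"
      by (auto intro: homog.homog_zero homog.homog_add homog.homog_scale)
    show "\<forall>v. \<exists>S c. finite S \<and> (\<forall>n\<in>S. c n \<in> ?V n) \<and> v = (\<Sum>n\<in>S. c n)"
      using decomp by simp
    show "\<forall>S c. finite S \<longrightarrow> (\<forall>n\<in>S. c n \<in> ?V n) \<longrightarrow> (\<Sum>n\<in>S. c n) = 0 \<longrightarrow> (\<forall>n\<in>S. c n = 0)"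
      using direct by simp
  qed
  show ?thesis
    unfolding H_module_VA_def Z_graded_VA_def graded_weight_H_def
  proof (intro conjI allI impI)
    show "vertex_algebra sc Y one" by (rule va)
    show "graded_direct sc ?V" by (rule gd)
    show "graded_direct sc ?V" by (rule gd)
    show "one \<in> ?V 0" by (simp add: homog.homog_one)
    fix u v m n r
    assume "u \<in> ?V m" "v \<in> ?V n"
    then show "Y u r v \<in> ?V (m + n - r - 1)" using Y_deg by simp
  next
    fix r n v assume v: "v \<in> ?V n"
    show "Lm r v \<in> ?V (n + int r)" using Y_deg[of n v 0 one "- int r - 1"] v
      by (simp add: Lm_Y homog.homog_one)
    show "L1 r v \<in> ?V (n - int r)" using L1_deg v by simp
    show "L0 r v = sc (ibinom (- 2 * n) r) v" using L0_eig v by simp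
  next
    fix r v show "Lm r v = Y v (- int r - 1) one" by (rule Lm_Y)
  next
    show "\<exists>N. \<forall>n<N. ?V n = {0}"
      by (rule exI[of _ 0]) (auto intro: homog.homog_zero dest: hom_neg_zero)
  next
    fix r show "L1 r one = (if r = 0 then one else 0)" by (rule L1_one)
  next
    fix d v w a b assume "v \<in> ?V d"
    then show "(\<Sum>k\<le>a. sc ((-1) ^ k) (L1 (a - k) (Y v (- b - 1) (L1 k w)))) =
        (\<Sum>k\<le>a. sc ((-1) ^ (a - k) * ibinom (int k - 2 * d + (int a - int k - b - 1) + 1) (a - k))
                    (Y (L1 k v) (int a - int k - b - 1) w))"
      using conjug by simp
  qed
qed

end

theorem proposition5p2:
  fixes p :: nat
    and scg :: "'k::field \<Rightarrow> 'g::ab_group_add \<Rightarrow> 'g"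
    and br :: "'g \<Rightarrow> 'g \<Rightarrow> 'g" and fm :: "'g \<Rightarrow> 'g \<Rightarrow> 'k" and ell :: 'k
    and sc :: "'k \<Rightarrow> 'v::ab_group_add \<Rightarrow> 'v"
    and rho :: "'g \<Rightarrow> int \<Rightarrow> 'v \<Rightarrow> 'v" and one :: 'v
    and Y :: "'v \<Rightarrow> int \<Rightarrow> 'v \<Rightarrow> 'v"
    and Lm L0 L1 :: "nat \<Rightarrow> 'v \<Rightarrow> 'v"
  assumes "prime p" and "odd p" and "of_nat p = (0::'k)" and "alg_closed TYPE('k)"
    and "lie_alg_form scg br fm"
    and "affine_vacuum_module scg br fm ell sc rho one"
    and "vertex_algebra sc Y one"
    and "\<forall>a n w. Y (rho a (-1) one) n w = rho a n w"
    and "H_action_induced sc rho one Lm L0 L1"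
  shows "H_module_VA sc Y one (\<lambda>d. {v. homog sc rho one d v}) Lm L0 L1"
proof -
  interpret HVA scg br fm ell sc rho one Y Lm L0 L1
    by (rule HVA.intro) (fact assms(6), fact assms(7), fact assms(8), fact assms(9))
  show ?thesis by (rule main)
qed

end
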